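(* Let $k\geq 0$ be fixed. There are constants $c_1$ and $q^*_k$ (depending on $k$) such that for all $q\geq q^*_k$ the following holds: if $\vec{x}=(x_0,\ldots,x_k)$ is a vector of nonnegative integers with $wt_q(\vec{x})\geq 2^q+c_1\binom{q}{k}$, then Paul has a winning strategy in the $q$-round pathological liar game with $k$ lies and initial state $\vec{x}$.
   Context: Pathological liar game: a state is a vector $\vec{x}=(x_0,\ldots,x_k)$ of nonnegative integers. In each of $q$ rounds Paul chooses a legal question $\vec{a}=(a_0,\ldots,a_k)$ with integers $0\leq a_i\leq x_i$, and Carole answers Y or N; the new state is $Y(\vec{x},\vec{a})=(a_0,\,a_1+x_0-a_0,\,\ldots,\,a_k+x_{k-1}-a_{k-1})$ or $N(\vec{x},\vec{a})=(x_0-a_0,\,x_1-a_1+a_0,\,\ldots,\,x_k-a_k+a_{k-1})$ respectively. Paul wins iff after $q$ rounds $\sum_i x_i\geq 1$. Weight: $wt_q(\vec{x})=\sum_{i=0}^k x_i\binom{q}{\leq k-i}$ where $\binom{q}{\leq m}=\sum_{j=0}^m\binom{q}{j}$. *)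

theory Defs
  imports Complex_Main
begin

text \<open>States and questions are lists of naturals of length k+1 (indices 0..k).\<close>

definition legal_question :: "nat list \<Rightarrow> nat list \<Rightarrow> bool" where
  "legal_question x a \<longleftrightarrow> length a = length x \<and> (\<forall>i<length x. a ! i \<le> x ! i)"

definition yes_state :: "nat list \<Rightarrow> nat list \<Rightarrow> nat list" where
  "yes_state x a = map (\<lambda>i. if i = 0 then a ! 0 else a ! i + (x ! (i - 1) - a ! (i - 1))) [0..<length x]"

definition no_state :: "nat list \<Rightarrow> nat list \<Rightarrow> nat list" where
  "no_state x a = map (\<lambda>i. if i = 0 then x ! 0 - a ! 0 else (x ! i - a ! i) + a ! (i - 1)) [0..<length x]"

fun paul_wins :: "nat \<Rightarrow> nat list \<Rightarrow> bool" where
  "paul_wins 0 x \<longleftrightarrow> sum_list x \<ge> 1"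
| "paul_wins (Suc q) x \<longleftrightarrow>
     (\<exists>a. legal_question x a \<and> paul_wins q (yes_state x a) \<and> paul_wins q (no_state x a))"

definition binom_le :: "nat \<Rightarrow> nat \<Rightarrow> nat" where
  "binom_le q m = (\<Sum>j\<le>m. q choose j)"

definition wt :: "nat \<Rightarrow> nat list \<Rightarrow> nat" where
  "wt q x = (\<Sum>i<length x. x ! i * binom_le q (length x - 1 - i))"

end

theory Submission
  imports Defs
begin


definition bbi :: "nat \<Rightarrow> int \<Rightarrow> nat" where
  "bbi t m = (if m < 0 then 0 else binom_le t (nat m))"
definition cbi :: "nat \<Rightarrow> int \<Rightarrow> nat" where
  "cbi t m = (if m < 0 then 0 else t choose (nat m))"

lemma nat_1_plus[simp]: "nat (1 + int n) = Suc n" by arith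

lemma binom_le_Suc: "binom_le t (Suc m) = binom_le t m + (t choose Suc m)"
  by (simp add: binom_le_def)

lemma binom_le_0[simp]: "binom_le t 0 = 1"
  by (simp add: binom_le_def)

lemma binom_le_pascal: "binom_le (Suc t) (Suc m) = binom_le t (Suc m) + binom_le t m"
proof (induction m)
  case 0
  then show ?case by (simp add: binom_le_Suc)
next
  case (Suc m)
  have "binom_le (Suc t) (Suc (Suc m)) = binom_le (Suc t) (Suc m) + (Suc t choose Suc (Suc m))"
    by (rule binom_le_Suc)
  also have "\<dots> = binom_le t (Suc m) + binom_le t m + (t choose Suc m) + (t choose Suc (Suc m))"
    using Suc by simp
  also have "\<dots> = binom_le t (Suc (Suc m)) + binom_le t (Suc m)"
    by (simp add: binom_le_Suc)
  finally show ?case .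
qed

lemma bbi_pascal: "bbi (Suc t) m = bbi t m + bbi t (m - 1)"
proof (cases "m < 0")
  case True then show ?thesis by (simp add: bbi_def)
next
  case False
  show ?thesis
  proof (cases "m = 0")
    case True then show ?thesis by (simp add: bbi_def)
  next
    case False
    with \<open>\<not> m < 0\<close> have "\<exists>n. m = int (Suc n)" by (intro exI[of _ "nat m - 1"]) arith
    then obtain n where n: "m = int (Suc n)" by blast
    show ?thesis unfolding n by (simp add: bbi_def binom_le_pascal)
  qed
qed

lemma cbi_pascal: "cbi (Suc t) m = cbi t m + cbi t (m - 1)"
proof (cases "m < 0")
  case True then show ?thesis by (simp add: cbi_def)
next
  case False
  show ?thesis
  proof (cases "m = 0")
    case True then show ?thesis by (simp add: cbi_def)
  next
    case False
    with \<open>\<not> m < 0\<close> have "\<exists>n. m = int (Suc n)" by (intro exI[of _ "nat m - 1"]) arith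
    then obtain n where n: "m = int (Suc n)" by blast
    show ?thesis unfolding n by (simp add: cbi_def)
  qed
qed

lemma bbi_cbi: "bbi t m = bbi t (m - 1) + cbi t m"
proof (cases "m < 0")
  case True then show ?thesis by (simp add: bbi_def cbi_def)
next
  case False
  show ?thesis
  proof (cases "m = 0")
    case True then show ?thesis by (simp add: bbi_def cbi_def)
  next
    case False
    with \<open>\<not> m < 0\<close> have "\<exists>n. m = int (Suc n)" by (intro exI[of _ "nat m - 1"]) arith
    then obtain n where n: "m = int (Suc n)" by blast
    show ?thesis unfolding n by (simp add: bbi_def cbi_def binom_le_Suc)
  qed
qed

lemma cbi_sum: "int (\<Sum>i<n. cbi r (m - int i)) = int (bbi r m) - int (bbi r (m - int n))"
proof (induction n)
  case 0 then show ?case by simp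
next
  case (Suc n)
  have "bbi r (m - int n) = bbi r (m - int (Suc n)) + cbi r (m - int n)"
    using bbi_cbi[of r "m - int n"] by (simp add: algebra_simps)
  then show ?case using Suc by simp
qed



definition lf :: "(nat \<Rightarrow> int) \<Rightarrow> nat list \<Rightarrow> int" where
  "lf f x = (\<Sum>i<length x. int (x!i) * f i)"

lemma yes_nth: "i < length x \<Longrightarrow> yes_state x a ! i = (if i = 0 then a ! 0 else a ! i + (x ! (i - 1) - a ! (i - 1)))"
  by (simp add: yes_state_def)
lemma no_nth: "i < length x \<Longrightarrow> no_state x a ! i = (if i = 0 then x ! 0 - a ! 0 else (x ! i - a ! i) + a ! (i - 1))"
  by (simp add: no_state_def)
lemma yes_len[simp]: "length (yes_state x a) = length x" by (simp add: yes_state_def)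
lemma no_len[simp]: "length (no_state x a) = length x" by (simp add: no_state_def)

lemma lf_yes_expand:
  assumes lx: "length x = Suc k" and le: "\<forall>i<Suc k. a!i \<le> x!i" and f0: "f (Suc k) = 0"
  shows "lf f (yes_state x a) = (\<Sum>i<Suc k. int (a!i) * f i + (int (x!i) - int (a!i)) * f (Suc i))"
proof -
  have "lf f (yes_state x a) = (\<Sum>i<Suc k. int (yes_state x a ! i) * f i)"
    by (simp add: lf_def lx)
  also have "\<dots> = int (a!0) * f 0 + (\<Sum>i<k. int (yes_state x a ! Suc i) * f (Suc i))"
    by (subst sum.lessThan_Suc_shift) (simp add: yes_nth lx)
  also have "(\<Sum>i<k. int (yes_state x a ! Suc i) * f (Suc i)) =
      (\<Sum>i<k. int (a ! Suc i) * f (Suc i) + (int (x!i) - int (a!i)) * f (Suc i))"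
  proof (rule sum.cong)
    fix i assume "i \<in> {..<k}"
    then have "a ! i \<le> x ! i" "i < k" using le by auto
    then show "int (yes_state x a ! Suc i) * f (Suc i) = int (a ! Suc i) * f (Suc i) + (int (x!i) - int (a!i)) * f (Suc i)"
      by (simp add: yes_nth lx of_nat_diff algebra_simps)
  qed simp
  also have "int (a!0) * f 0 + \<dots> = (\<Sum>i<Suc k. int (a!i) * f i) + (\<Sum>i<k. (int (x!i) - int (a!i)) * f (Suc i))"
    using sum.lessThan_Suc_shift[of "\<lambda>i. int (a!i) * f i" k] by (simp add: sum.distrib del: sum.lessThan_Suc)
  also have "(\<Sum>i<k. (int (x!i) - int (a!i)) * f (Suc i)) = (\<Sum>i<Suc k. (int (x!i) - int (a!i)) * f (Suc i))"
    by (simp add: f0)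
  finally show ?thesis by (simp add: sum.distrib)
qed

lemma lf_no_expand:
  assumes lx: "length x = Suc k" and le: "\<forall>i<Suc k. a!i \<le> x!i" and f0: "f (Suc k) = 0"
  shows "lf f (no_state x a) = (\<Sum>i<Suc k. (int (x!i) - int (a!i)) * f i + int (a!i) * f (Suc i))"
proof -
  have "lf f (no_state x a) = (\<Sum>i<Suc k. int (no_state x a ! i) * f i)"
    by (simp add: lf_def lx)
  also have "\<dots> = (int (x!0) - int (a!0)) * f 0 + (\<Sum>i<k. int (no_state x a ! Suc i) * f (Suc i))"
    by (subst sum.lessThan_Suc_shift) (simp add: no_nth lx le of_nat_diff)
  also have "(\<Sum>i<k. int (no_state x a ! Suc i) * f (Suc i)) =
      (\<Sum>i<k. (int (x ! Suc i) - int (a ! Suc i)) * f (Suc i) + int (a!i) * f (Suc i))"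
  proof (rule sum.cong)
    fix i assume "i \<in> {..<k}"
    then have "a ! Suc i \<le> x ! Suc i" "i < k" using le by auto
    then show "int (no_state x a ! Suc i) * f (Suc i) = (int (x ! Suc i) - int (a ! Suc i)) * f (Suc i) + int (a!i) * f (Suc i)"
      by (simp add: no_nth lx of_nat_diff algebra_simps)
  qed simp
  also have "(int (x!0) - int (a!0)) * f 0 + \<dots> = (\<Sum>i<Suc k. (int (x!i) - int (a!i)) * f i) + (\<Sum>i<k. int (a!i) * f (Suc i))"
    using sum.lessThan_Suc_shift[of "\<lambda>i. (int (x!i) - int (a!i)) * f i" k] by (simp add: sum.distrib del: sum.lessThan_Suc)
  also have "(\<Sum>i<k. int (a!i) * f (Suc i)) = (\<Sum>i<Suc k. int (a!i) * f (Suc i))"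
    by (simp add: f0)
  finally show ?thesis by (simp add: sum.distrib)
qed

lemma lf_yes:
  assumes lx: "length x = Suc k" and le: "\<forall>i<Suc k. a!i \<le> x!i" and f0: "f (Suc k) = 0"
  shows "2 * lf f (yes_state x a) = lf (\<lambda>i. f i + f (Suc i)) x
     + (\<Sum>i<Suc k. (2 * int (a!i) - int (x!i)) * (f i - f (Suc i)))"
proof -
  have "2 * lf f (yes_state x a) = 2 * (\<Sum>i<Suc k. int (a!i) * f i + (int (x!i) - int (a!i)) * f (Suc i))"
    using lf_yes_expand[where f=f, OF lx le f0] by simp
  also have "\<dots> = (\<Sum>i<Suc k. int (x!i) * (f i + f (Suc i)) + (2 * int (a!i) - int (x!i)) * (f i - f (Suc i)))"
    by (simp add: sum_distrib_left algebra_simps)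
  also have "\<dots> = lf (\<lambda>i. f i + f (Suc i)) x + (\<Sum>i<Suc k. (2 * int (a!i) - int (x!i)) * (f i - f (Suc i)))"
    by (simp add: lf_def lx sum.distrib)
  finally show ?thesis .
qed

lemma lf_no:
  assumes lx: "length x = Suc k" and le: "\<forall>i<Suc k. a!i \<le> x!i" and f0: "f (Suc k) = 0"
  shows "2 * lf f (no_state x a) = lf (\<lambda>i. f i + f (Suc i)) x
     - (\<Sum>i<Suc k. (2 * int (a!i) - int (x!i)) * (f i - f (Suc i)))"
proof -
  have "2 * lf f (no_state x a) = 2 * (\<Sum>i<Suc k. (int (x!i) - int (a!i)) * f i + int (a!i) * f (Suc i))"
    using lf_no_expand[where f=f, OF lx le f0] by simp
  also have "\<dots> = (\<Sum>i<Suc k. int (x!i) * (f i + f (Suc i)) - (2 * int (a!i) - int (x!i)) * (f i - f (Suc i)))"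
    by (simp add: sum_distrib_left algebra_simps)
  also have "\<dots> = lf (\<lambda>i. f i + f (Suc i)) x - (\<Sum>i<Suc k. (2 * int (a!i) - int (x!i)) * (f i - f (Suc i)))"
    by (simp add: lf_def lx sum_subtractf)
  finally show ?thesis .
qed



definition safe :: "nat \<Rightarrow> (nat \<Rightarrow> bool) set \<Rightarrow> ((nat \<Rightarrow> bool) \<Rightarrow> int) \<Rightarrow> bool" where
  "safe t W l = (\<forall>w\<in>W. \<forall>w'\<in>W. w \<noteq> w' \<longrightarrow> 0 \<le> l w \<longrightarrow> 0 \<le> l w' \<longrightarrow>
      l w + l w' + 1 \<le> int (card {r. r < t \<and> w r \<noteq> w' r}))"

definition lY :: "nat \<Rightarrow> ((nat \<Rightarrow> bool) \<Rightarrow> int) \<Rightarrow> (nat \<Rightarrow> bool) \<Rightarrow> int" where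
  "lY t l = (\<lambda>w. if w t then l w else l w - 1)"
definition lN :: "nat \<Rightarrow> ((nat \<Rightarrow> bool) \<Rightarrow> int) \<Rightarrow> (nat \<Rightarrow> bool) \<Rightarrow> int" where
  "lN t l = (\<lambda>w. if w t then l w - 1 else l w)"

lemma binom_le_zero[simp]: "binom_le 0 m = 1"
  by (induction m) (auto simp: binom_le_Suc)

lemma card_Suc_rounds:
  "card {r. r < Suc t \<and> P r} = card {r. r < t \<and> P r} + (if P t then 1 else 0)"
proof -
  have e: "{r. r < Suc t \<and> P r} = {r. r < t \<and> P r} \<union> (if P t then {t} else {})"
    by (auto simp: less_Suc_eq)
  show ?thesis unfolding e
    by (subst card_Un_disjoint) auto
qed

lemma safe_step:
  assumes "safe (Suc t) W l"
  shows "safe t W (lY t l)" "safe t W (lN t l)"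
proof -
  { fix w w' assume ww: "w \<in> W" "w' \<in> W" "w \<noteq> w'" "0 \<le> l w - (if w t then 0 else 1)" "0 \<le> l w' - (if w' t then 0 else 1)"
    then have "0 \<le> l w" "0 \<le> l w'" by (auto split: if_splits)
    with assms ww have h: "l w + l w' + 1 \<le> int (card {r. r < t \<and> w r \<noteq> w' r}) + (if w t \<noteq> w' t then 1 else 0)"
      unfolding safe_def by (force simp: card_Suc_rounds)
    have "(l w - (if w t then 0 else 1)) + (l w' - (if w' t then 0 else 1)) + 1 \<le> int (card {r. r < t \<and> w r \<noteq> w' r})"
      using h by (auto split: if_splits)
  } note A = this
  { fix w w' assume ww: "w \<in> W" "w' \<in> W" "w \<noteq> w'" "0 \<le> l w - (if w t then 1 else 0)" "0 \<le> l w' - (if w' t then 1 else 0)"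
    then have "0 \<le> l w" "0 \<le> l w'" by (auto split: if_splits)
    with assms ww have h: "l w + l w' + 1 \<le> int (card {r. r < t \<and> w r \<noteq> w' r}) + (if w t \<noteq> w' t then 1 else 0)"
      unfolding safe_def by (force simp: card_Suc_rounds)
    have "(l w - (if w t then 1 else 0)) + (l w' - (if w' t then 1 else 0)) + 1 \<le> int (card {r. r < t \<and> w r \<noteq> w' r})"
      using h by (auto split: if_splits)
  } note B = this
  have eY: "lY t l = (\<lambda>w. l w - (if w t then 0 else 1))" by (auto simp: lY_def)
  have eN: "lN t l = (\<lambda>w. l w - (if w t then 1 else 0))" by (auto simp: lN_def)
  show "safe t W (lY t l)" unfolding safe_def eY using A by blast
  show "safe t W (lN t l)" unfolding safe_def eN using B by blast
qed

lemma claimK: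
  assumes "finite W" "safe t W l"
  shows "(\<Sum>w\<in>W. bbi t (l w)) \<le> 2 ^ t"
  using assms
proof (induction t arbitrary: l)
  case 0
  have sub: "\<And>w. bbi 0 (l w) = (if 0 \<le> l w then 1 else 0)"
    by (simp add: bbi_def)
  have "(\<Sum>w\<in>W. bbi 0 (l w)) = card {w\<in>W. 0 \<le> l w}"
  proof -
    have "{w\<in>W. 0 \<le> l w} = W \<inter> {w. 0 \<le> l w}" by auto
    then show ?thesis by (simp add: sub sum.If_cases \<open>finite W\<close>)
  qed
  also have "\<dots> \<le> 1"
  proof -
    have "\<forall>w\<in>{w\<in>W. 0 \<le> l w}. \<forall>w'\<in>{w\<in>W. 0 \<le> l w}. w = w'"
    proof (intro ballI, rule ccontr)
      fix w w' assume "w \<in> {w\<in>W. 0 \<le> l w}" "w' \<in> {w\<in>W. 0 \<le> l w}" "w \<noteq> w'"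
      then have h: "w \<in> W" "w' \<in> W" "w \<noteq> w'" "0 \<le> l w" "0 \<le> l w'" by auto
      have "l w + l w' + 1 \<le> int (card {r. r < (0::nat) \<and> w r \<noteq> w' r})"
        using "0.prems"(2) h unfolding safe_def by blast
      then show False using h by simp
    qed
    then show ?thesis
      using card_le_Suc0_iff_eq[of "{w\<in>W. 0 \<le> l w}"] \<open>finite W\<close> by auto
  qed
  finally show ?case by simp
next
  case (Suc t)
  have "(\<Sum>w\<in>W. bbi (Suc t) (l w)) = (\<Sum>w\<in>W. bbi t (lY t l w)) + (\<Sum>w\<in>W. bbi t (lN t l w))"
    unfolding sum.distrib[symmetric] by (rule sum.cong) (auto simp: bbi_pascal lY_def lN_def)
  also have "\<dots> \<le> 2^t + 2^t"
    using Suc.IH[of "lY t l"] Suc.IH[of "lN t l"] safe_step[OF Suc.prems(2)] Suc.prems(1)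
    by (simp add: add_mono)
  finally show ?case by simp
qed



definition rep :: "nat \<Rightarrow> (nat \<Rightarrow> bool) set \<Rightarrow> ((nat \<Rightarrow> bool) \<Rightarrow> int) \<Rightarrow> nat \<Rightarrow> nat list \<Rightarrow> bool" where
  "rep k W l n0 x = (length x = Suc k \<and> (\<forall>i<k. x!i = card {w\<in>W. l w = int k - int i})
      \<and> x!k = n0 + card {w\<in>W. l w = 0})"

lemma card_split_side:
  assumes "finite W"
  shows "card {w\<in>W. l w = m} = card {w\<in>W. l w = m \<and> w s} + card {w\<in>W. l w = m \<and> \<not> w s}"
proof -
  have "{w\<in>W. l w = m} = {w\<in>W. l w = m \<and> w s} \<union> {w\<in>W. l w = m \<and> \<not> w s}" by auto
  moreover have "{w\<in>W. l w = m \<and> w s} \<inter> {w\<in>W. l w = m \<and> \<not> w s} = {}" by auto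
  ultimately show ?thesis using assms by (simp add: card_Un_disjoint)
qed

lemma card_lY:
  assumes "finite W"
  shows "card {w\<in>W. lY s l w = m} = card {w\<in>W. l w = m \<and> w s} + card {w\<in>W. l w = m + 1 \<and> \<not> w s}"
proof -
  have "{w\<in>W. lY s l w = m} = {w\<in>W. l w = m \<and> w s} \<union> {w\<in>W. l w = m + 1 \<and> \<not> w s}"
    by (auto simp: lY_def split: if_splits)
  moreover have "{w\<in>W. l w = m \<and> w s} \<inter> {w\<in>W. l w = m + 1 \<and> \<not> w s} = {}" by auto
  ultimately show ?thesis using assms by (simp add: card_Un_disjoint)
qed

lemma card_lN:
  assumes "finite W"
  shows "card {w\<in>W. lN s l w = m} = card {w\<in>W. l w = m \<and> \<not> w s} + card {w\<in>W. l w = m + 1 \<and> w s}"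
proof -
  have "{w\<in>W. lN s l w = m} = {w\<in>W. l w = m \<and> \<not> w s} \<union> {w\<in>W. l w = m + 1 \<and> w s}"
    by (auto simp: lN_def split: if_splits)
  moreover have "{w\<in>W. l w = m \<and> \<not> w s} \<inter> {w\<in>W. l w = m + 1 \<and> w s} = {}" by auto
  ultimately show ?thesis using assms by (simp add: card_Un_disjoint)
qed

lemma card_empty_top:
  assumes "\<forall>w\<in>W. l w \<le> int k"
  shows "card {w\<in>W. l w = int k + 1 \<and> P w} = 0"
proof -
  have "{w\<in>W. l w = int k + 1 \<and> P w} = {}" using assms by force
  then show ?thesis by (metis card.empty)
qed

definition eq_q :: "nat \<Rightarrow> (nat \<Rightarrow> bool) set \<Rightarrow> ((nat \<Rightarrow> bool) \<Rightarrow> int) \<Rightarrow> nat \<Rightarrow> nat \<Rightarrow> nat list" where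
  "eq_q k W l s p = map (\<lambda>i. if i < k then card {w\<in>W. l w = int k - int i \<and> w s}
       else card {w\<in>W. l w = 0 \<and> w s} + p) [0..<Suc k]"

lemma eq_q_nth: "i < Suc k \<Longrightarrow> eq_q k W l s p ! i = (if i < k then card {w\<in>W. l w = int k - int i \<and> w s}
       else card {w\<in>W. l w = 0 \<and> w s} + p)"
  unfolding eq_q_def by (simp del: upt_Suc)

lemma eq_q_len[simp]: "length (eq_q k W l s p) = Suc k" by (simp add: eq_q_def)

lemma eq_q_legal:
  assumes fin: "finite W" and r: "rep k W l n0 x" and p: "p \<le> n0"
  shows "legal_question x (eq_q k W l s p)"
  unfolding legal_question_def
proof (intro conjI allI impI)
  show "length (eq_q k W l s p) = length x" using r by (simp add: rep_def)
  fix i assume "i < length x"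
  then have i: "i < Suc k" using r by (simp add: rep_def)
  show "eq_q k W l s p ! i \<le> x ! i"
  proof (cases "i < k")
    case True
    then show ?thesis using r i card_split_side[OF fin, of l "int k - int i" s]
      by (simp add: eq_q_nth rep_def)
  next
    case False
    then have "i = k" using i by simp
    then show ?thesis using r p card_split_side[OF fin, of l 0 s]
      by (simp add: eq_q_nth rep_def)
  qed
qed

lemma rep_yes:
  assumes fin: "finite W" and lk: "\<forall>w\<in>W. l w \<le> int k" and r: "rep k W l n0 x" and p: "p \<le> n0"
  shows "rep k W (lY s l) p (yes_state x (eq_q k W l s p))"
proof -
  let ?a = "eq_q k W l s p"
  have lx: "length x = Suc k" using r by (simp add: rep_def)
  have xi: "\<And>i. i < k \<Longrightarrow> x!i = card {w\<in>W. l w = int k - int i}" using r by (simp add: rep_def)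
  have xk: "x!k = n0 + card {w\<in>W. l w = 0}" using r by (simp add: rep_def)
  have A: "\<forall>i<k. yes_state x ?a ! i = card {w\<in>W. lY s l w = int k - int i}"
  proof (intro allI impI)
    fix i assume i: "i < k"
    show "yes_state x ?a ! i = card {w\<in>W. lY s l w = int k - int i}"
    proof (cases "i = 0")
      case True
      then show ?thesis using i lx card_lY[OF fin, of s l "int k"] card_empty_top[OF lk]
        by (simp add: yes_nth eq_q_nth)
    next
      case False
      define m where "m = int k - int i"
      then have e: "int k - int (i - 1) = m + 1" using False by simp
      have "x ! (i-1) = card {w\<in>W. l w = m + 1 \<and> w s} + card {w\<in>W. l w = m + 1 \<and> \<not> w s}"
        using xi[of "i-1"] i card_split_side[OF fin, of l "m + 1" s] unfolding e by simp
      moreover have "?a ! (i - 1) = card {w\<in>W. l w = m + 1 \<and> w s}" proof -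
        have "i - 1 < k" "i - 1 < Suc k" using i by arith+
        then show ?thesis using eq_q_nth[of "i-1" k W l s p] unfolding e by simp
      qed
      moreover have "?a ! i = card {w\<in>W. l w = m \<and> w s}" using i by (simp add: eq_q_nth m_def)
      ultimately show ?thesis using False i lx card_lY[OF fin, of s l m] unfolding m_def[symmetric]
        by (simp add: yes_nth)
    qed
  qed
  have B: "yes_state x ?a ! k = p + card {w\<in>W. lY s l w = 0}"
  proof (cases "k = 0")
    case True
    then show ?thesis using lx card_lY[OF fin, of s l 0] card_empty_top[OF lk]
      by (simp add: yes_nth eq_q_nth)
  next
    case False
    then have e: "int k - int (k - 1) = 1" by simp
    have "x ! (k-1) = card {w\<in>W. l w = 1 \<and> w s} + card {w\<in>W. l w = 1 \<and> \<not> w s}"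
      using xi[of "k-1"] False e card_split_side[OF fin, of l 1 s] by simp
    then show ?thesis using False lx card_lY[OF fin, of s l 0] e
      by (simp add: yes_nth eq_q_nth)
  qed
  show ?thesis unfolding rep_def using A B lx by simp
qed

lemma rep_no:
  assumes fin: "finite W" and lk: "\<forall>w\<in>W. l w \<le> int k" and r: "rep k W l n0 x" and p: "p \<le> n0"
  shows "rep k W (lN s l) (n0 - p) (no_state x (eq_q k W l s p))"
proof -
  let ?a = "eq_q k W l s p"
  have lx: "length x = Suc k" using r by (simp add: rep_def)
  have xi: "\<And>i. i < k \<Longrightarrow> x!i = card {w\<in>W. l w = int k - int i}" using r by (simp add: rep_def)
  have xk: "x!k = n0 + card {w\<in>W. l w = 0}" using r by (simp add: rep_def)
  have A: "\<forall>i<k. no_state x ?a ! i = card {w\<in>W. lN s l w = int k - int i}"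
  proof (intro allI impI)
    fix i assume i: "i < k"
    have xs: "x ! i = card {w\<in>W. l w = int k - int i \<and> w s} + card {w\<in>W. l w = int k - int i \<and> \<not> w s}"
      using xi[of i] i card_split_side[OF fin, of l "int k - int i" s] by simp
    show "no_state x ?a ! i = card {w\<in>W. lN s l w = int k - int i}"
    proof (cases "i = 0")
      case True
      then show ?thesis using i lx xs card_lN[OF fin, of s l "int k"] card_empty_top[OF lk]
        by (simp add: no_nth eq_q_nth)
    next
      case False
      define m where "m = int k - int i"
      then have e: "int k - int (i - 1) = m + 1" using False by simp
      have "?a ! (i - 1) = card {w\<in>W. l w = m + 1 \<and> w s}" proof -
        have "i - 1 < k" "i - 1 < Suc k" using i by arith+
        then show ?thesis using eq_q_nth[of "i-1" k W l s p] unfolding e by simp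
      qed
      moreover have "?a ! i = card {w\<in>W. l w = m \<and> w s}" using i by (simp add: eq_q_nth m_def)
      ultimately show ?thesis using False i lx xs card_lN[OF fin, of s l m] unfolding m_def[symmetric]
        by (simp add: no_nth)
    qed
  qed
  have xs0: "x ! k = n0 + card {w\<in>W. l w = 0 \<and> w s} + card {w\<in>W. l w = 0 \<and> \<not> w s}"
    using xk card_split_side[OF fin, of l 0 s] by simp
  have B: "no_state x ?a ! k = (n0 - p) + card {w\<in>W. lN s l w = 0}"
  proof (cases "k = 0")
    case True
    then show ?thesis using lx xs0 p card_lN[OF fin, of s l 0] card_empty_top[OF lk]
      by (simp add: no_nth eq_q_nth)
  next
    case False
    then have e: "int k - int (k - 1) = 1" by simp
    then show ?thesis using False lx xs0 p card_lN[OF fin, of s l 0]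
      by (simp add: no_nth eq_q_nth)
  qed
  show ?thesis unfolding rep_def using A B lx by simp
qed



lemma sum_pascal_W:
  "(\<Sum>w\<in>W. bbi (Suc t) (l w)) = (\<Sum>w\<in>W. bbi t (lY t l w)) + (\<Sum>w\<in>W. bbi t (lN t l w))"
  unfolding sum.distrib[symmetric] by (rule sum.cong) (auto simp: bbi_pascal lY_def lN_def)

lemma EG:
  assumes "finite W" "\<forall>w\<in>W. l w \<le> int k" "safe t W l" "rep k W l n0 x"
    "2^t \<le> n0 + (\<Sum>w\<in>W. bbi t (l w))"
  shows "paul_wins t x"
  using assms
proof (induction t arbitrary: l n0 x)
  case 0
  have lx: "length x = Suc k" using "0.prems"(4) by (simp add: rep_def)
  have "1 \<le> sum_list x"
  proof (cases "1 \<le> n0")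
    case True
    have "x!k \<ge> n0" using "0.prems"(4) by (simp add: rep_def)
    moreover have "x!k \<le> sum_list x" using lx by (intro member_le_sum_list) auto
    ultimately show ?thesis using True by simp
  next
    case False
    then have "(\<Sum>w\<in>W. bbi 0 (l w)) \<noteq> 0" using "0.prems"(5) by simp
    then obtain w where w: "w \<in> W" "bbi 0 (l w) \<noteq> 0" by (meson sum.neutral)
    then have lw: "0 \<le> l w" by (simp add: bbi_def split: if_splits)
    have lwk: "l w \<le> int k" using "0.prems"(2) w by simp
    define i where "i = k - nat (l w)"
    have ik: "i < Suc k" unfolding i_def by simp
    have "1 \<le> x!i"
    proof (cases "l w = 0")
      case True
      then have "i = k" unfolding i_def by simp
      moreover have "0 < card {w\<in>W. l w = 0}"
        using w True "0.prems"(1) by (auto simp: card_gt_0_iff)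
      ultimately show ?thesis using "0.prems"(4) by (simp add: rep_def)
    next
      case False
      then have i: "i < k" "int k - int i = l w" using lw lwk unfolding i_def by auto
      have "0 < card {w'\<in>W. l w' = l w}"
        using w "0.prems"(1) by (auto simp: card_gt_0_iff)
      then have "card {w'\<in>W. l w' = l w} \<ge> 1" by simp
      then show ?thesis using "0.prems"(4) i by (simp add: rep_def)
    qed
    moreover have "x!i \<le> sum_list x" using lx ik by (intro member_le_sum_list) auto
    ultimately show ?thesis by simp
  qed
  then show ?case by simp
next
  case (Suc t)
  note fin = Suc.prems(1) and lk = Suc.prems(2) and sf = Suc.prems(3) and r = Suc.prems(4)
  define LY where "LY = (\<Sum>w\<in>W. bbi t (lY t l w))"
  define LN where "LN = (\<Sum>w\<in>W. bbi t (lN t l w))"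
  have tot: "2 ^ Suc t \<le> n0 + LY + LN" using Suc.prems(5) sum_pascal_W[of t l W] unfolding LY_def LN_def by simp
  have LYb: "LY \<le> 2^t" unfolding LY_def using claimK[OF fin safe_step(1)[OF sf]] .
  have LNb: "LN \<le> 2^t" unfolding LN_def using claimK[OF fin safe_step(2)[OF sf]] .
  define p where "p = min n0 (2^t - LY)"
  have p: "p \<le> n0" unfolding p_def by simp
  have wY: "2^t \<le> p + LY" using tot LNb unfolding p_def by auto
  have wN: "2^t \<le> (n0 - p) + LN" using tot LYb unfolding p_def by auto
  have lkY: "\<forall>w\<in>W. lY t l w \<le> int k" using lk by (auto simp: lY_def)
  have lkN: "\<forall>w\<in>W. lN t l w \<le> int k" using lk by (auto simp: lN_def)
  have Y: "paul_wins t (yes_state x (eq_q k W l t p))"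
    using Suc.IH[OF fin lkY safe_step(1)[OF sf] rep_yes[OF fin lk r p]] wY unfolding LY_def by simp
  have N: "paul_wins t (no_state x (eq_q k W l t p))"
    using Suc.IH[OF fin lkN safe_step(2)[OF sf] rep_no[OF fin lk r p]] wN unfolding LN_def by simp
  show ?case using Y N eq_q_legal[OF fin r p] by auto
qed



definition cw :: "nat \<Rightarrow> nat \<Rightarrow> nat \<Rightarrow> bool" where
  "cw b n = (\<lambda>r. r div b = n)"

lemma cw_inj: "0 < b \<Longrightarrow> cw b n = cw b n' \<Longrightarrow> n = n'"
  unfolding cw_def by (metis div_mult_self1_is_m)

lemma idx_inj:
  fixes i j i' j' C :: nat
  assumes "j < C" "j' < C" "i * C + j = i' * C + j'"
  shows "i = i' \<and> j = j'"
proof -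
  have "(i * C + j) div C = i" "(i * C + j) mod C = j" using assms(1) by auto
  moreover have "(i' * C + j') div C = i'" "(i' * C + j') mod C = j'" using assms(2) by auto
  ultimately show ?thesis using assms(3) by metis
qed

lemma wt_split:
  assumes "length x = Suc k"
  shows "wt t x = (\<Sum>i<k. x!i * binom_le t (k - i)) + x!k"
  using assms by (simp add: wt_def)

lemma transition:
  fixes x :: "nat list"
  assumes lx: "length x = Suc k" and cap: "\<forall>i<k. x!i \<le> C" and C0: "0 < C"
    and T: "(2*k+1) * (k * C) \<le> T" and w: "2^T \<le> wt T x"
  shows "paul_wins T x"
proof -
  define b where "b = 2*k+1"
  have b0: "0 < b" unfolding b_def by simp
  define S where "S = (SIGMA i:{..<k}. {..<x!i})"
  define g where "g = (\<lambda>(i,j). cw b (i * C + j))"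
  define W where "W = g ` S"
  define l where "l = (\<lambda>w. if w \<in> W then int k - int (fst (inv_into S g w)) else -1)"
  have finS: "finite S" unfolding S_def by simp
  have jC: "\<And>i j. (i,j) \<in> S \<Longrightarrow> j < C" using cap unfolding S_def by fastforce
  have inj: "inj_on g S"
  proof (rule inj_onI)
    fix u v assume u: "u \<in> S" and v: "v \<in> S" and e: "g u = g v"
    obtain i j where uij: "u = (i,j)" by fastforce
    obtain i' j' where vij: "v = (i',j')" by fastforce
    have "i * C + j = i' * C + j'" using e cw_inj[OF b0] unfolding g_def uij vij by simp
    then show "u = v" using idx_inj jC u v uij vij by blast
  qed
  have lg: "\<And>i j. (i,j) \<in> S \<Longrightarrow> l (g (i,j)) = int k - int i"
    unfolding l_def W_def using inj by (simp add: inv_into_f_f)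
  have finW: "finite W" unfolding W_def using finS by simp
  have lk: "\<forall>w\<in>W. l w \<le> int k"
    unfolding W_def using lg by force
  have lpos: "\<forall>w\<in>W. l w \<ge> 1"
    unfolding W_def using lg unfolding S_def by force
  have cnt: "\<And>i. i < k \<Longrightarrow> card {w\<in>W. l w = int k - int i} = x!i"
  proof -
    fix i assume i: "i < k"
    have "{w\<in>W. l w = int k - int i} = g ` ({i} \<times> {..<x!i})"
    proof
      show "{w\<in>W. l w = int k - int i} \<subseteq> g ` ({i} \<times> {..<x!i})"
      proof
        fix w assume "w \<in> {w\<in>W. l w = int k - int i}"
        then obtain i' j where ij: "(i',j) \<in> S" "w = g (i',j)" "l w = int k - int i"
          unfolding W_def by auto
        then have "i' = i" using lg by (auto simp: S_def)
        then show "w \<in> g ` ({i} \<times> {..<x!i})" using ij by (auto simp: S_def)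
      qed
      show "g ` ({i} \<times> {..<x!i}) \<subseteq> {w\<in>W. l w = int k - int i}"
        using i lg unfolding W_def S_def by auto
    qed
    moreover have "inj_on g ({i} \<times> {..<x!i})"
      by (rule inj_on_subset[OF inj]) (use i in \<open>auto simp: S_def\<close>)
    ultimately show "card {w\<in>W. l w = int k - int i} = x!i"
      by (simp add: card_image card_cartesian_product)
  qed
  have cnt0: "card {w\<in>W. l w = 0} = 0"
  proof -
    have "{w\<in>W. l w = 0} = {}" using lpos by force
    then show ?thesis by (metis card.empty)
  qed
  have r: "rep k W l (x!k) x" unfolding rep_def using lx cnt cnt0 by simp
  have sf: "safe T W l"
    unfolding safe_def
  proof (intro ballI impI)
    fix w w' assume w: "w \<in> W" and w': "w' \<in> W" and ne: "w \<noteq> w'"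
    obtain i j where ij: "(i,j) \<in> S" "w = g (i,j)" using w unfolding W_def by auto
    obtain i' j' where ij': "(i',j') \<in> S" "w' = g (i',j')" using w' unfolding W_def by auto
    define n where "n = i * C + j"
    define n' where "n' = i' * C + j'"
    have wn: "w = cw b n" "w' = cw b n'" using ij ij' unfolding g_def n_def n'_def by auto
    have nn: "n \<noteq> n'" using ne wn by auto
    have "n < k * C"
    proof -
      have "i < k" "j < C" using ij jC by (auto simp: S_def)
      then have "i * C + j < i * C + C" by simp
      also have "\<dots> = Suc i * C" by simp
      also have "\<dots> \<le> k * C" using \<open>i < k\<close> by (intro mult_right_mono) auto
      finally show ?thesis unfolding n_def .
    qed
    then have nb: "b * n + b \<le> T" using T unfolding b_def
      by (metis Suc_leI add.commute mult_Suc_right mult_le_mono2 order_trans)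
    have sub: "{b*n ..< b*n + b} \<subseteq> {r. r < T \<and> w r \<noteq> w' r}"
    proof
      fix r assume "r \<in> {b*n ..< b*n + b}"
      then have "r div b = n" using b0 by (auto intro: div_nat_eqI simp: mult.commute)
      then show "r \<in> {r. r < T \<and> w r \<noteq> w' r}" using nb \<open>r \<in> _\<close> nn unfolding wn cw_def by auto
    qed
    have "b \<le> card {r. r < T \<and> w r \<noteq> w' r}"
      using card_mono[OF _ sub] by simp
    moreover have "l w \<le> int k" "l w' \<le> int k" using lk w w' by auto
    ultimately show "l w + l w' + 1 \<le> int (card {r. r < T \<and> w r \<noteq> w' r})"
      unfolding b_def by linarith
  qed
  have sumW: "(\<Sum>w\<in>W. bbi T (l w)) = (\<Sum>i<k. x!i * binom_le T (k - i))"
  proof -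
    have "(\<Sum>w\<in>W. bbi T (l w)) = (\<Sum>u\<in>S. bbi T (l (g u)))"
      unfolding W_def using inj by (simp add: sum.reindex)
    also have "\<dots> = (\<Sum>u\<in>S. binom_le T (k - fst u))"
      by (rule sum.cong) (auto simp: lg bbi_def S_def nat_diff_distrib)
    also have "\<dots> = (\<Sum>(i,j)\<in>S. binom_le T (k - i))"
      by (simp add: case_prod_beta)
    also have "\<dots> = (\<Sum>i<k. \<Sum>j<x!i. binom_le T (k - i))"
      unfolding S_def by (rule sum.Sigma[symmetric]) auto
    also have "\<dots> = (\<Sum>i<k. x!i * binom_le T (k - i))" by simp
    finally show ?thesis .
  qed
  show ?thesis
    using EG[OF finW lk sf r] w sumW wt_split[OF lx, of T] by simp
qed



definition wfn :: "nat \<Rightarrow> nat \<Rightarrow> nat \<Rightarrow> int" where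
  "wfn k t = (\<lambda>i. int (bbi t (int k - int i)))"
definition fc :: "nat \<Rightarrow> nat \<Rightarrow> nat \<Rightarrow> nat \<Rightarrow> int" where
  "fc k e r = (\<lambda>i. int (cbi r (int k - int i - int e)))"

lemma wfn_pascal: "wfn k t i + wfn k t (Suc i) = wfn k (Suc t) i"
  using bbi_pascal[of t "int k - int i"] by (simp add: wfn_def algebra_simps)
lemma wfn_diff: "wfn k t i - wfn k t (Suc i) = int (cbi t (int k - int i))"
  using bbi_cbi[of t "int k - int i"] by (simp add: wfn_def algebra_simps)
lemma wfn_top: "wfn k t (Suc k) = 0" by (simp add: wfn_def bbi_def)
lemma fc_pascal: "fc k e r i + fc k e r (Suc i) = fc k e (Suc r) i"
  using cbi_pascal[of r "int k - int i - int e"] by (simp add: fc_def algebra_simps)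
lemma fc_top: "fc k e r (Suc k) = 0" by (simp add: fc_def cbi_def)
lemma fc_nonneg: "0 \<le> fc k e r i" by (simp add: fc_def)

lemma wt_lf: "length x = Suc k \<Longrightarrow> int (wt t x) = lf (wfn k t) x"
  unfolding wt_def lf_def wfn_def bbi_def
  by (simp, intro sum.cong) (auto simp: nat_diff_distrib)

lemma sum_cbi_all: "(\<Sum>i<Suc k. cbi r (int k - int i - int e)) = bbi r (int k - int e)"
proof -
  have e1: "(\<Sum>i<Suc k. cbi r (int k - int i - int e)) = (\<Sum>i<Suc k. cbi r ((int k - int e) - int i))"
    by (simp add: algebra_simps)
  have "int (\<Sum>i<Suc k. cbi r ((int k - int e) - int i)) = int (bbi r (int k - int e)) - int (bbi r (int k - int e - int (Suc k)))"
    by (rule cbi_sum)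
  moreover have "bbi r (int k - int e - int (Suc k)) = 0" by (simp add: bbi_def)
  ultimately have "int (\<Sum>i<Suc k. cbi r ((int k - int e) - int i)) = int (bbi r (int k - int e))" by simp
  then show ?thesis unfolding e1 by (simp only: of_nat_eq_iff)
qed

lemma binom_le_mono2: "m \<le> m' \<Longrightarrow> binom_le t m \<le> binom_le t m'"
  unfolding binom_le_def by (intro sum_mono2) auto

lemma bbi_le: "e \<le> k \<Longrightarrow> bbi r (int k - int e) \<le> binom_le r k"
  by (simp add: bbi_def binom_le_mono2)

lemma lf_fc_0:
  assumes "length x = Suc k" "e \<le> k"
  shows "lf (fc k e 0) x = int (x ! (k - e))"
proof -
  have "lf (fc k e 0) x = (\<Sum>i<Suc k. (if i = k - e then int (x!i) else 0))"
    unfolding lf_def fc_def using assms by (intro sum.cong) (auto simp: cbi_def)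
  also have "\<dots> = int (x ! (k - e))" using assms by (simp add: sum.delta)
  finally show ?thesis .
qed

lemma mod2_le: "(n mod 2) * c \<le> (c::nat)"
  by (cases "even n") auto

lemma min_facts:
  fixes X P :: nat
  shows "X \<le> P \<Longrightarrow> min X ((X + P) div 2) = X"
    and "P < X \<Longrightarrow> 2 * min X ((X + P) div 2) \<le> X + P \<and> X + P \<le> 2 * min X ((X + P) div 2) + 1"
  by (auto simp: min_def)

definition Pq :: "nat \<Rightarrow> nat \<Rightarrow> nat list \<Rightarrow> nat" where
  "Pq k t x = (\<Sum>i<k. (x!i mod 2) * (t choose (k - i)))"

definition mq :: "nat \<Rightarrow> nat \<Rightarrow> nat list \<Rightarrow> nat list" where
  "mq k t x = map (\<lambda>i. if i < k then x!i div 2 else min (x!k) ((x!k + Pq k t x) div 2)) [0..<Suc k]"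

lemma mq_nth: "i < Suc k \<Longrightarrow> mq k t x ! i = (if i < k then x!i div 2 else min (x!k) ((x!k + Pq k t x) div 2))"
  unfolding mq_def by (simp del: upt_Suc)
lemma mq_len[simp]: "length (mq k t x) = Suc k" by (simp add: mq_def)

lemma mq_le: "\<forall>i<Suc k. mq k t x ! i \<le> x ! i"
proof (intro allI impI)
  fix i assume i: "i < Suc k"
  show "mq k t x ! i \<le> x ! i"
  proof (cases "i < k")
    case True then show ?thesis using i by (simp add: mq_nth)
  next
    case False then have "i = k" using i by simp
    then show ?thesis by (simp add: mq_nth)
  qed
qed

lemma mq_legal: "length x = Suc k \<Longrightarrow> legal_question x (mq k t x)"
  using mq_le by (simp add: legal_question_def)

lemma Pq_le: "Pq k t x \<le> binom_le t k"
proof -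
  have "Pq k t x \<le> (\<Sum>i<k. t choose (k - i))"
    unfolding Pq_def by (intro sum_mono) (metis mod2_le)
  also have "\<dots> \<le> (\<Sum>i<Suc k. cbi t (int k - int i - int 0))"
    by (simp add: cbi_def nat_diff_distrib)
  also have "\<dots> = bbi t (int k - int 0)" by (rule sum_cbi_all)
  also have "\<dots> = binom_le t k" by (simp add: bbi_def)
  finally show ?thesis .
qed

lemma binom_le_pos: "1 \<le> binom_le t k"
  by (simp add: binom_le_def) (metis atMost_iff binomial_n_0 le0 member_le_sum  finite_atMost  One_nat_def not_one_le_zero)

definition dk :: "nat \<Rightarrow> nat \<Rightarrow> nat list \<Rightarrow> int" where
  "dk k t x = 2 * int (mq k t x ! k) - int (x!k)"

lemma dk_bound: "\<bar>dk k t x\<bar> \<le> int (binom_le t k)"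
proof -
  let ?P = "Pq k t x"
  have a: "mq k t x ! k = min (x!k) ((x!k + ?P) div 2)" by (simp add: mq_nth)
  have "\<bar>dk k t x\<bar> \<le> max (int ?P) 1"
  proof (cases "x!k \<le> ?P")
    case True then show ?thesis unfolding dk_def a using min_facts(1)[OF True] by simp
  next
    case False then have "?P < x!k" by simp
    from min_facts(2)[OF this] show ?thesis unfolding dk_def a by linarith
  qed
  also have "\<dots> \<le> int (binom_le t k)" using Pq_le[of k t x] binom_le_pos[of t k] by simp
  finally show ?thesis .
qed

lemma dk_good: "Pq k t x \<le> x!k \<Longrightarrow> - int (Pq k t x) + dk k t x \<in> {-1, 0}"
proof -
  assume h: "Pq k t x \<le> x!k"
  have a: "mq k t x ! k = min (x!k) ((x!k + Pq k t x) div 2)" by (simp add: mq_nth)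
  show ?thesis
  proof (cases "Pq k t x = x!k")
    case True then show ?thesis unfolding dk_def a by simp
  next
    case False then have "Pq k t x < x!k" using h by simp
    from min_facts(2)[OF this] show ?thesis unfolding dk_def a by auto
  qed
qed

lemma D_bound: "\<bar>- int (Pq k t x) + dk k t x\<bar> \<le> int (binom_le t k)"
proof -
  let ?P = "Pq k t x"
  have a: "mq k t x ! k = min (x!k) ((x!k + ?P) div 2)" by (simp add: mq_nth)
  have "\<bar>- int ?P + dk k t x\<bar> \<le> max (int ?P) 1"
  proof (cases "x!k \<le> ?P")
    case True then show ?thesis unfolding dk_def a using min_facts(1)[OF True] by simp
  next
    case False then have "?P < x!k" by simp
    from min_facts(2)[OF this] show ?thesis unfolding dk_def a by linarith
  qed
  also have "\<dots> \<le> int (binom_le t k)" using Pq_le[of k t x] binom_le_pos[of t k] by simp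
  finally show ?thesis .
qed



lemma d_small: "i < k \<Longrightarrow> 2 * int (mq k t x ! i) - int (x ! i) = - int (x!i mod 2)"
proof -
  assume i: "i < k"
  have e: "int (x!i) = 2 * int (x!i div 2) + int (x!i mod 2)"
    using div_mult_mod_eq[of "x!i" 2] by linarith
  show ?thesis using i e by (simp add: mq_nth)
qed

lemma Dsum_weight:
  "(\<Sum>i<Suc k. (2 * int (mq k t x ! i) - int (x!i)) * (wfn k t i - wfn k t (Suc i)))
     = - int (Pq k t x) + dk k t x"
proof -
  have "(\<Sum>i<Suc k. (2 * int (mq k t x ! i) - int (x!i)) * (wfn k t i - wfn k t (Suc i)))
      = (\<Sum>i<k. (2 * int (mq k t x ! i) - int (x!i)) * (wfn k t i - wfn k t (Suc i))) + dk k t x"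
    by (simp add: wfn_diff dk_def cbi_def)
  also have "(\<Sum>i<k. (2 * int (mq k t x ! i) - int (x!i)) * (wfn k t i - wfn k t (Suc i))) = - int (Pq k t x)"
  proof -
    have "(\<Sum>i<k. (2 * int (mq k t x ! i) - int (x!i)) * (wfn k t i - wfn k t (Suc i)))
        = (\<Sum>i<k. - int (x!i mod 2 * (t choose (k - i))))"
    proof (rule sum.cong)
      fix i assume "i \<in> {..<k}"
      then have i: "i < k" by simp
      then have "nat (int k - int i) = k - i" by simp
      then show "(2 * int (mq k t x ! i) - int (x!i)) * (wfn k t i - wfn k t (Suc i)) = - int (x!i mod 2 * (t choose (k - i)))"
        using i by (simp add: wfn_diff d_small cbi_def)
    qed simp
    also have "\<dots> = - int (Pq k t x)" unfolding Pq_def by (simp add: sum_negf)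
    finally show ?thesis .
  qed
  finally show ?thesis .
qed

lemma round_weight:
  assumes lx: "length x = Suc k"
  shows "2 * int (wt t (yes_state x (mq k t x))) = int (wt (Suc t) x) + (- int (Pq k t x) + dk k t x)"
    and "2 * int (wt t (no_state x (mq k t x))) = int (wt (Suc t) x) - (- int (Pq k t x) + dk k t x)"
proof -
  have g: "(\<lambda>i. wfn k t i + wfn k t (Suc i)) = wfn k (Suc t)" by (rule ext) (rule wfn_pascal)
  show "2 * int (wt t (yes_state x (mq k t x))) = int (wt (Suc t) x) + (- int (Pq k t x) + dk k t x)"
    using lf_yes[where f="wfn k t" and a="mq k t x", OF lx mq_le wfn_top] wt_lf[OF lx] wt_lf[of "yes_state x (mq k t x)"] lx
    unfolding g Dsum_weight by simp
  show "2 * int (wt t (no_state x (mq k t x))) = int (wt (Suc t) x) - (- int (Pq k t x) + dk k t x)"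
    using lf_no[where f="wfn k t" and a="mq k t x", OF lx mq_le wfn_top] wt_lf[OF lx] wt_lf[of "no_state x (mq k t x)"] lx
    unfolding g Dsum_weight by simp
qed

lemma Dsum_fc_bound:
  assumes ek: "e \<le> k"
  shows "\<bar>\<Sum>i<Suc k. (2 * int (mq k t x ! i) - int (x!i)) * (fc k e r i - fc k e r (Suc i))\<bar>
     \<le> int (binom_le (Suc r) k) + (if e = 0 then int (binom_le t k) else 0)"
proof -
  let ?d = "\<lambda>i. 2 * int (mq k t x ! i) - int (x!i)"
  let ?h = "\<lambda>i. fc k e r i - fc k e r (Suc i)"
  have "\<bar>\<Sum>i<Suc k. ?d i * ?h i\<bar> \<le> (\<Sum>i<Suc k. \<bar>?d i * ?h i\<bar>)" by (rule sum_abs)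
  also have "\<dots> = (\<Sum>i<k. \<bar>?d i * ?h i\<bar>) + \<bar>?d k * ?h k\<bar>" by simp
  also have "(\<Sum>i<k. \<bar>?d i * ?h i\<bar>) \<le> (\<Sum>i<k. fc k e (Suc r) i)"
  proof (rule sum_mono)
    fix i assume "i \<in> {..<k}"
    then have "\<bar>?d i\<bar> \<le> 1" using d_small[of i k t x] by simp
    moreover have "\<bar>?h i\<bar> \<le> fc k e (Suc r) i"
      using fc_nonneg[of k e r i] fc_nonneg[of k e r "Suc i"] fc_pascal[of k e r i] by linarith
    ultimately show "\<bar>?d i * ?h i\<bar> \<le> fc k e (Suc r) i"
    proof -
      assume a1: "\<bar>?d i\<bar> \<le> 1" and a2: "\<bar>?h i\<bar> \<le> fc k e (Suc r) i"
      have "\<bar>?d i\<bar> * \<bar>?h i\<bar> \<le> 1 * \<bar>?h i\<bar>" by (rule mult_right_mono[OF a1]) simp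
      then show ?thesis using a2 by (simp add: abs_mult)
    qed
  qed
  also have "\<bar>?d k * ?h k\<bar> \<le> (if e = 0 then int (binom_le t k) else 0)"
  proof -
    have hk: "?h k = (if e = 0 then 1 else 0)" by (simp add: fc_def cbi_def)
    have "\<bar>?d k\<bar> \<le> int (binom_le t k)" using dk_bound[of k t x] by (simp add: dk_def)
    then show ?thesis unfolding hk by simp
  qed
  also have "(\<Sum>i<k. fc k e (Suc r) i) \<le> int (binom_le (Suc r) k)"
  proof -
    have "(\<Sum>i<k. fc k e (Suc r) i) \<le> (\<Sum>i<Suc k. fc k e (Suc r) i)"
      using fc_nonneg[of k e "Suc r" k] by simp
    also have "\<dots> = int (\<Sum>i<Suc k. cbi (Suc r) (int k - int i - int e))" by (simp add: fc_def)
    also have "\<dots> = int (bbi (Suc r) (int k - int e))" by (simp only: sum_cbi_all)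
    also have "\<dots> \<le> int (binom_le (Suc r) k)" using bbi_le[OF ek] by simp
    finally show ?thesis .
  qed
  finally show ?thesis by simp
qed

lemma round_fc:
  assumes lx: "length x = Suc k" and ek: "e \<le> k"
  shows "\<bar>2 * lf (fc k e r) (yes_state x (mq k t x)) - lf (fc k e (Suc r)) x\<bar>
           \<le> int (binom_le (Suc r) k) + (if e = 0 then int (binom_le t k) else 0)"
    and "\<bar>2 * lf (fc k e r) (no_state x (mq k t x)) - lf (fc k e (Suc r)) x\<bar>
           \<le> int (binom_le (Suc r) k) + (if e = 0 then int (binom_le t k) else 0)"
proof -
  have g: "(\<lambda>i. fc k e r i + fc k e r (Suc i)) = fc k e (Suc r)" by (rule ext) (rule fc_pascal)
  show "\<bar>2 * lf (fc k e r) (yes_state x (mq k t x)) - lf (fc k e (Suc r)) x\<bar>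
           \<le> int (binom_le (Suc r) k) + (if e = 0 then int (binom_le t k) else 0)"
    using lf_yes[where f="fc k e r" and a="mq k t x", OF lx mq_le fc_top] Dsum_fc_bound[OF ek, of t x r] unfolding g by simp
  show "\<bar>2 * lf (fc k e r) (no_state x (mq k t x)) - lf (fc k e (Suc r)) x\<bar>
           \<le> int (binom_le (Suc r) k) + (if e = 0 then int (binom_le t k) else 0)"
    using lf_no[where f="fc k e r" and a="mq k t x", OF lx mq_le fc_top] Dsum_fc_bound[OF ek, of t x r] unfolding g by simp
qed



fun surf :: "nat \<Rightarrow> nat \<Rightarrow> nat \<Rightarrow> nat" where
  "surf k q 0 = 0"
| "surf k q (Suc u) = 2 * surf k q u + binom_le (q - k + u) k"

definition MI :: "nat \<Rightarrow> nat \<Rightarrow> nat \<Rightarrow> nat \<Rightarrow> nat \<Rightarrow> nat list \<Rightarrow> bool" where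
  "MI k q TE Cap t x = (length x = Suc k \<and>
     2^t + int (surf k q (t - (q - k))) \<le> int (wt t x) \<and>
     (\<forall>\<tau>. TE < \<tau> \<longrightarrow> \<tau> \<le> t \<longrightarrow> \<tau> \<le> q - k \<longrightarrow>
        2^(t-\<tau>) * int (binom_le (\<tau>-1) k) + (\<Sum>s\<in>{\<tau><..t}. int (binom_le (s-\<tau>) k + binom_le (s-1) k) * 2^(t-s))
          \<le> lf (fc k 0 (t - \<tau>)) x) \<and>
     (\<forall>e. 1 \<le> e \<longrightarrow> e \<le> k \<longrightarrow>
        lf (fc k e (t - TE)) x + (\<Sum>s\<in>{TE<..t}. int (binom_le (s-TE) k) * 2^(t-s)) \<le> 2^(t-TE) * int Cap))"

lemma sum_split_top:
  fixes g :: "nat \<Rightarrow> int"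
  assumes "\<tau> \<le> t"
  shows "(\<Sum>s\<in>{\<tau><..Suc t}. g s * 2^(Suc t - s)) = g (Suc t) + 2 * (\<Sum>s\<in>{\<tau><..t}. g s * 2^(t - s))"
proof -
  have e: "{\<tau><..Suc t} = insert (Suc t) {\<tau><..t}" using assms by auto
  have "(\<Sum>s\<in>{\<tau><..t}. g s * 2^(Suc t - s)) = (\<Sum>s\<in>{\<tau><..t}. 2 * (g s * 2^(t - s)))"
    by (intro sum.cong) (auto simp: Suc_diff_le)
  then show ?thesis unfolding e by (simp add: sum_distrib_left)
qed

lemma MI_step_generic:
  assumes mi: "MI k q TE Cap (Suc t) x" and TE: "TE \<le> t" and tq: "Suc t \<le> q" and kq: "k \<le> q"
    and ly: "length y = Suc k"
    and hw: "int (wt (Suc t) x) - \<delta> \<le> 2 * int (wt t y)"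
    and d1: "\<delta> \<le> int (binom_le t k)"
    and d2: "Pq k t x \<le> x!k \<Longrightarrow> \<delta> \<le> 1"
    and hf: "\<And>e r. e \<le> k \<Longrightarrow> \<bar>2 * lf (fc k e r) y - lf (fc k e (Suc r)) x\<bar>
           \<le> int (binom_le (Suc r) k) + (if e = 0 then int (binom_le t k) else 0)"
  shows "MI k q TE Cap t y"
proof -
  have lx: "length x = Suc k" using mi by (simp add: MI_def)
  have W: "2^(Suc t) + int (surf k q (Suc t - (q - k))) \<le> int (wt (Suc t) x)" using mi by (simp add: MI_def)
  have F: "\<And>\<tau>. TE < \<tau> \<Longrightarrow> \<tau> \<le> Suc t \<Longrightarrow> \<tau> \<le> q - k \<Longrightarrow>
        2^(Suc t-\<tau>) * int (binom_le (\<tau>-1) k) + (\<Sum>s\<in>{\<tau><..Suc t}. int (binom_le (s-\<tau>) k + binom_le (s-1) k) * 2^(Suc t-s))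
          \<le> lf (fc k 0 (Suc t - \<tau>)) x" using mi unfolding MI_def by blast
  have U: "\<And>e. 1 \<le> e \<Longrightarrow> e \<le> k \<Longrightarrow>
        lf (fc k e (Suc t - TE)) x + (\<Sum>s\<in>{TE<..Suc t}. int (binom_le (s-TE) k) * 2^(Suc t-s)) \<le> 2^(Suc t-TE) * int Cap"
    using mi unfolding MI_def by blast
  have wy: "2^t + int (surf k q (t - (q - k))) \<le> int (wt t y)"
  proof (cases "Suc t \<le> q - k")
    case True
    have "2^(Suc t - Suc t) * int (binom_le (Suc t - 1) k) + (\<Sum>s\<in>{Suc t<..Suc t}. int (binom_le (s-Suc t) k + binom_le (s-1) k) * 2^(Suc t-s))
          \<le> lf (fc k 0 (Suc t - Suc t)) x" using F[of "Suc t"] TE True by simp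
    then have "int (binom_le t k) \<le> int (x!k)" using lf_fc_0[OF lx, of 0] by simp
    then have "Pq k t x \<le> x!k" using Pq_le[of k t x] by linarith
    then have "\<delta> \<le> 1" by (rule d2)
    moreover have "t - (q - k) = 0" "Suc t - (q - k) = 0" using True by auto
    ultimately have "2 * 2^t - 1 \<le> 2 * int (wt t y)" using W hw by simp
    moreover have "\<And>a b::int. 2 * b - 1 \<le> 2 * a \<Longrightarrow> b \<le> a" by presburger
    ultimately have "2^t \<le> int (wt t y)" by blast
    then show ?thesis using \<open>t - (q - k) = 0\<close> by simp
  next
    case False
    then have e: "Suc t - (q - k) = Suc (t - (q - k))" "q - k + (t - (q - k)) = t" using kq by auto
    show ?thesis using W hw d1 unfolding e(1) by (simp add: e(2))
  qed
  have fy: "\<forall>\<tau>. TE < \<tau> \<longrightarrow> \<tau> \<le> t \<longrightarrow> \<tau> \<le> q - k \<longrightarrow>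
        2^(t-\<tau>) * int (binom_le (\<tau>-1) k) + (\<Sum>s\<in>{\<tau><..t}. int (binom_le (s-\<tau>) k + binom_le (s-1) k) * 2^(t-s))
          \<le> lf (fc k 0 (t - \<tau>)) y"
  proof (intro allI impI)
    fix \<tau> assume h: "TE < \<tau>" "\<tau> \<le> t" "\<tau> \<le> q - k"
    define r where "r = t - \<tau>"
    have sr: "Suc t - \<tau> = Suc r" unfolding r_def using h by simp
    have a: "2^(Suc r) * int (binom_le (\<tau>-1) k) + (\<Sum>s\<in>{\<tau><..Suc t}. int (binom_le (s-\<tau>) k + binom_le (s-1) k) * 2^(Suc t-s))
          \<le> lf (fc k 0 (Suc r)) x" using F[of \<tau>] h unfolding sr by simp
    have b: "(\<Sum>s\<in>{\<tau><..Suc t}. int (binom_le (s-\<tau>) k + binom_le (s-1) k) * 2^(Suc t-s))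
       = int (binom_le (Suc r) k + binom_le t k) + 2 * (\<Sum>s\<in>{\<tau><..t}. int (binom_le (s-\<tau>) k + binom_le (s-1) k) * 2^(t-s))"
      using sum_split_top[OF h(2), of "\<lambda>s. int (binom_le (s-\<tau>) k + binom_le (s-1) k)"] sr by simp
    have c: "\<bar>2 * lf (fc k 0 r) y - lf (fc k 0 (Suc r)) x\<bar> \<le> int (binom_le (Suc r) k) + int (binom_le t k)"
      using hf[of 0 r] by simp
    show "2^(t-\<tau>) * int (binom_le (\<tau>-1) k) + (\<Sum>s\<in>{\<tau><..t}. int (binom_le (s-\<tau>) k + binom_le (s-1) k) * 2^(t-s))
          \<le> lf (fc k 0 (t - \<tau>)) y"
      using a b c unfolding r_def[symmetric] by simp
  qed
  have uy: "\<forall>e. 1 \<le> e \<longrightarrow> e \<le> k \<longrightarrow>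
        lf (fc k e (t - TE)) y + (\<Sum>s\<in>{TE<..t}. int (binom_le (s-TE) k) * 2^(t-s)) \<le> 2^(t-TE) * int Cap"
  proof (intro allI impI)
    fix e assume h: "1 \<le> e" "e \<le> k"
    define r where "r = t - TE"
    have sr: "Suc t - TE = Suc r" unfolding r_def using TE by simp
    have a: "lf (fc k e (Suc r)) x + (\<Sum>s\<in>{TE<..Suc t}. int (binom_le (s-TE) k) * 2^(Suc t-s)) \<le> 2^(Suc r) * int Cap"
      using U[OF h] unfolding sr by simp
    have b: "(\<Sum>s\<in>{TE<..Suc t}. int (binom_le (s-TE) k) * 2^(Suc t-s))
       = int (binom_le (Suc r) k) + 2 * (\<Sum>s\<in>{TE<..t}. int (binom_le (s-TE) k) * 2^(t-s))"
      using sum_split_top[OF TE, of "\<lambda>s. int (binom_le (s-TE) k)"] sr by simp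
    have c: "\<bar>2 * lf (fc k e r) y - lf (fc k e (Suc r)) x\<bar> \<le> int (binom_le (Suc r) k)"
      using hf[of e r] h by simp
    show "lf (fc k e (t - TE)) y + (\<Sum>s\<in>{TE<..t}. int (binom_le (s-TE) k) * 2^(t-s)) \<le> 2^(t-TE) * int Cap"
      using a b c unfolding r_def[symmetric] by simp
  qed
  show ?thesis unfolding MI_def using ly wy fy uy by blast
qed

lemma MI_step:
  assumes mi: "MI k q TE Cap (Suc t) x" and TE: "TE \<le> t" and tq: "Suc t \<le> q" and kq: "k \<le> q"
  shows "MI k q TE Cap t (yes_state x (mq k t x))" "MI k q TE Cap t (no_state x (mq k t x))"
proof -
  have lx: "length x = Suc k" using mi by (simp add: MI_def)
  define D where "D = - int (Pq k t x) + dk k t x"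
  have d1: "\<bar>D\<bar> \<le> int (binom_le t k)" unfolding D_def by (rule D_bound)
  have d2: "Pq k t x \<le> x!k \<Longrightarrow> \<bar>D\<bar> \<le> 1" unfolding D_def using dk_good[of k t x] by auto
  show "MI k q TE Cap t (yes_state x (mq k t x))"
    by (rule MI_step_generic[OF mi TE tq kq _ _ d1 d2])
       (use round_weight(1)[OF lx, of t] round_fc(1)[OF lx] lx in \<open>auto simp: D_def\<close>)
  show "MI k q TE Cap t (no_state x (mq k t x))"
    by (rule MI_step_generic[OF mi TE tq kq _ _ d1 d2])
       (use round_weight(2)[OF lx, of t] round_fc(2)[OF lx] lx in \<open>auto simp: D_def\<close>)
qed



lemma MI_base:
  assumes mi: "MI k q TE Cap TE x" and C0: "0 < Cap" and T: "(2*k+1) * (k * Cap) \<le> TE"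
  shows "paul_wins TE x"
proof -
  have lx: "length x = Suc k" using mi by (simp add: MI_def)
  have w: "2^TE \<le> wt TE x"
  proof -
    have "2^TE + int (surf k q (TE - (q - k))) \<le> int (wt TE x)" using mi by (simp add: MI_def)
    then have "(2::int)^TE \<le> int (wt TE x)" by linarith
    then show ?thesis by (metis of_nat_le_iff of_nat_numeral of_nat_power)
  qed
  have cap: "\<forall>i<k. x!i \<le> Cap"
  proof (intro allI impI)
    fix i assume i: "i < k"
    have "lf (fc k (k - i) (TE - TE)) x + (\<Sum>s\<in>{TE<..TE}. int (binom_le (s-TE) k) * 2^(TE-s)) \<le> 2^(TE-TE) * int Cap"
    proof -
      have "1 \<le> k - i" "k - i \<le> k" using i by auto
      then show ?thesis using mi unfolding MI_def by blast
    qed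
    then have "lf (fc k (k - i) 0) x \<le> int Cap" by simp
    then show "x!i \<le> Cap" using lf_fc_0[OF lx, of "k - i"] i by simp
  qed
  show ?thesis by (rule transition[OF lx cap C0 T w])
qed

lemma mid:
  assumes "TE \<le> t" "t \<le> q" "k \<le> q" "MI k q TE Cap t x" "0 < Cap" "(2*k+1) * (k * Cap) \<le> TE"
  shows "paul_wins t x"
  using assms
proof (induction t arbitrary: x)
  case 0
  then have "TE = 0" by simp
  then show ?case using MI_base 0 by metis
next
  case (Suc t)
  show ?case
  proof (cases "TE = Suc t")
    case True
    then show ?thesis using MI_base Suc.prems by metis
  next
    case False
    then have TE: "TE \<le> t" using Suc.prems by simp
    have lx: "length x = Suc k" using Suc.prems(4) by (simp add: MI_def)
    have Y: "paul_wins t (yes_state x (mq k t x))"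
      using Suc.IH[OF TE _ Suc.prems(3) MI_step(1)[OF Suc.prems(4) TE Suc.prems(2) Suc.prems(3)] Suc.prems(5,6)] Suc.prems(2) by simp
    have N: "paul_wins t (no_state x (mq k t x))"
      using Suc.IH[OF TE _ Suc.prems(3) MI_step(2)[OF Suc.prems(4) TE Suc.prems(2) Suc.prems(3)] Suc.prems(5,6)] Suc.prems(2) by simp
    show ?thesis using Y N mq_legal[OF lx, of t] by auto
  qed
qed



lemma binom_le_Suc_mono: "binom_le t m \<le> binom_le (Suc t) m"
  by (cases m) (auto simp: binom_le_pascal)

lemma binom_le_mono1: "t \<le> t' \<Longrightarrow> binom_le t m \<le> binom_le t' m"
  by (induction t' rule: dec_induct) (auto intro: order_trans[OF _ binom_le_Suc_mono])

lemma binom_le_twice: "binom_le (Suc n) e + (n choose e) = 2 * binom_le n e"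
proof (cases e)
  case 0 then show ?thesis by simp
next
  case (Suc m)
  show ?thesis unfolding Suc using binom_le_pascal[of n m] binom_le_Suc[of n m] by simp
qed

lemma ident_H:
  "(\<Sum>s\<in>{\<tau><..\<tau>+n}. int ((m + (s - \<tau>) - 1) choose e) * 2^(\<tau>+n-s)) + int (binom_le (m+n) e)
     = 2^n * int (binom_le m e)"
proof (induction n)
  case 0 then show ?case by simp
next
  case (Suc n)
  have "(\<Sum>s\<in>{\<tau><..Suc (\<tau>+n)}. int ((m + (s - \<tau>) - 1) choose e) * 2^(Suc (\<tau>+n)-s))
      = int ((m + (Suc (\<tau>+n) - \<tau>) - 1) choose e) + 2 * (\<Sum>s\<in>{\<tau><..\<tau>+n}. int ((m + (s - \<tau>) - 1) choose e) * 2^(\<tau>+n-s))"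
    by (rule sum_split_top) simp
  moreover have "int ((m + (Suc (\<tau>+n) - \<tau>) - 1) choose e) = int ((m+n) choose e)" by simp
  moreover have "int (binom_le (m + Suc n) e) = 2 * int (binom_le (m+n) e) - int ((m+n) choose e)"
    using binom_le_twice[of "m+n" e] by simp
  ultimately show ?case using Suc by (simp add: algebra_simps)
qed

lemma poly_exp:
  fixes c d :: nat
  shows "\<exists>N. \<forall>n\<ge>N. c * (n+1)^d \<le> 2^n"
proof -
  define K where "K = c * 2^d * (d+1)^(d+1)"
  show ?thesis
  proof (intro exI allI impI)
    fix n assume n: "max (d+1) K + 1 \<le> n"
    then have n1: "d + 1 \<le> n" "K \<le> n" "1 \<le> n" by auto
    have "1 + real n \<le> 2 * real n" using n1 by simp
    then have "(1 + real n)^d \<le> (2 * real n)^d" by (rule power_mono) simp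
    then have "real (c * (n+1)^d) \<le> real c * (2 * real n)^d"
      by (simp add: mult_left_mono add.commute)
    also have "\<dots> = real K * real n ^ d / real (d+1)^(d+1)"
    proof -
      define Z where "Z = real (d+1)^(d+1)"
      have K: "real K = real c * 2^d * Z" unfolding K_def Z_def by (simp only: of_nat_mult of_nat_power of_nat_numeral)
      have pos: "Z \<noteq> 0" unfolding Z_def by simp
      show ?thesis unfolding K Z_def[symmetric] using pos by (simp add: power_mult_distrib)
    qed
    also have "\<dots> \<le> real n * real n ^ d / real (d+1)^(d+1)"
      using n1 by (intro divide_right_mono mult_right_mono) auto
    also have "\<dots> = (real n / real (d+1))^(d+1)"
      by (simp add: power_divide)
    also have "\<dots> \<le> real (n choose (d+1))"
      using binomial_ge_n_over_k_pow_k[of "d+1" n] n1 by simp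
    also have "\<dots> \<le> real (2^n)"
      using binomial_le_pow2[of n "d+1"] by (simp only: of_nat_le_iff)
    finally show "c * (n+1)^d \<le> 2^n" by (simp only: of_nat_le_iff)
  qed
qed

lemma binom_le_pow_bound: "binom_le q e \<le> (q+1)^e"
proof (induction e)
  case 0 then show ?case by simp
next
  case (Suc e)
  have c: "q choose Suc e \<le> q ^ Suc e"
  proof (cases "Suc e \<le> q")
    case True then show ?thesis by (rule binomial_le_pow)
  next
    case False then show ?thesis by (simp add: binomial_eq_0)
  qed
  have "q ^ Suc e \<le> q * (q+1)^e" by (simp add: power_mono)
  then have "binom_le q e + (q choose Suc e) \<le> (q+1)^e + q * (q+1)^e" using Suc c by linarith
  then show ?case by (simp add: binom_le_Suc)
qed

lemma surf_bound: "u \<le> k \<Longrightarrow> k \<le> q \<Longrightarrow> surf k q u + binom_le q k \<le> 2^u * binom_le q k"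
proof (induction u)
  case 0 then show ?case by simp
next
  case (Suc u)
  have "binom_le (q - k + u) k \<le> binom_le q k" using Suc.prems by (intro binom_le_mono1) simp
  then show ?case using Suc by simp
qed

lemma binom_le_le_choose: "2 * k \<le> q \<Longrightarrow> binom_le q k \<le> (k+1) * (q choose k)"
proof -
  assume h: "2 * k \<le> q"
  have "binom_le q k = (\<Sum>j\<le>k. q choose j)" by (simp add: binom_le_def)
  also have "\<dots> \<le> (\<Sum>j\<le>k. q choose k)" by (intro sum_mono binomial_mono) (use h in auto)
  also have "\<dots> = (k+1) * (q choose k)" by simp
  finally show ?thesis .
qed



lemma choose_pow_lower:
  assumes "1 \<le> e" "e \<le> k" "e \<le> n"
  shows "n ^ e \<le> k ^ e * (n choose e)"
proof -
  have "(real n / real e)^e \<le> real (n choose e)" using binomial_ge_n_over_k_pow_k[of e n] assms by simp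
  moreover have "(real n / real k)^e \<le> (real n / real e)^e"
    using assms by (intro power_mono divide_left_mono) auto
  ultimately have "(real n / real k)^e \<le> real (n choose e)" by linarith
  then have "real n ^ e / real k ^ e \<le> real (n choose e)" by (simp add: power_divide)
  then have "real n ^ e \<le> real k ^ e * real (n choose e)"
    using assms by (simp add: divide_le_eq mult.commute)
  then have "real (n ^ e) \<le> real (k ^ e * (n choose e))" by simp
  then show ?thesis by (simp only: of_nat_le_iff)
qed

lemma A2:
  assumes "1 \<le> e'" "e' \<le> e" "e \<le> k" "k \<le> q" "2^(TE+1) * k^k \<le> q"
  shows "((q - TE) choose (e - e')) * 2^(TE+1) \<le> binom_le q e"
proof (cases "e - e' \<le> q - TE")
  case False
  then show ?thesis by (simp add: binomial_eq_0)
next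
  case True
  have k1: "1 \<le> k" using assms by simp
  have "((q - TE) choose (e - e')) \<le> (q - TE)^(e - e')" using True by (rule binomial_le_pow)
  also have "\<dots> \<le> q^(e-e')" by (simp add: power_mono)
  also have "\<dots> \<le> q^(e - 1)" using assms by (intro power_increasing) auto
  finally have c: "((q - TE) choose (e - e')) \<le> q^(e-1)" .
  have ke: "k^e \<le> k^k" using assms k1 by (intro power_increasing) auto
  have "((q - TE) choose (e - e')) * 2^(TE+1) * k^e \<le> q^(e-1) * (2^(TE+1) * k^k)"
    using c ke by (simp add: mult_mono mult.assoc)
  also have "\<dots> \<le> q^(e-1) * q" using assms by simp
  also have "\<dots> = q^e" using assms by (simp add: power_eq_if)
  also have "\<dots> \<le> k^e * (q choose e)" by (rule choose_pow_lower) (use assms in auto)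
  also have "\<dots> \<le> k^e * binom_le q e" by (simp add: binom_le_def member_le_sum)
  finally have "((q - TE) choose (e - e')) * 2^(TE+1) * k^e \<le> binom_le q e * k^e" by (simp add: mult.commute)
  then show ?thesis using k1 by simp
qed

lemma sq_le_imp: "(a::nat)^2 \<le> b^2 \<Longrightarrow> a \<le> b"
  using power2_le_imp_le by blast

lemma A1:
  assumes T0: "\<forall>n\<ge>TE. (4*k)^k * (4*k+4) * (n+1)^k \<le> 2^n"
    and Q3: "(k^k * (4*k+4))^2 * (q+1)^(4*k) \<le> 2^q"
    and ek: "e \<le> k" and tau: "TE < \<tau>" "\<tau> + k \<le> q" and q1: "1 \<le> q"
  shows "binom_le q e * ((4*k+4) * binom_le \<tau> k) \<le> ((q - \<tau>) choose e) * 2^\<tau>"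
proof -
  define j where "j = q - \<tau>"
  have jk: "k \<le> j" unfolding j_def using tau by simp
  have X: "(4*k+4) * binom_le \<tau> k \<le> (4*k+4) * (\<tau>+1)^k" using binom_le_pow_bound[of \<tau> k] by simp
  show ?thesis
  proof (cases "e = 0")
    case True
    have "1 \<le> (4*k)^k" by (cases k) auto
    then have "(4*k+4) * (\<tau>+1)^k \<le> (4*k)^k * (4*k+4) * (\<tau>+1)^k" by simp
    also have "\<dots> \<le> 2^\<tau>" using T0 tau by simp
    finally have "(4*k+4) * binom_le \<tau> k \<le> 2^\<tau>" using X by linarith
    then show ?thesis using True by simp
  next
    case False
    then have e1: "1 \<le> e" by simp
    then have k1: "1 \<le> k" using ek by simp
    have low: "j^e \<le> k^e * (j choose e)" by (rule choose_pow_lower) (use e1 ek jk in auto)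
    have B: "binom_le q e \<le> (q+1)^e" by (rule binom_le_pow_bound)
    have main: "(k*(q+1))^e * ((4*k+4) * (\<tau>+1)^k) \<le> j^e * 2^\<tau>"
    proof (cases "2 * \<tau> \<le> q")
      case True
      then have "q + 1 \<le> 4 * j" unfolding j_def using q1 by simp
      then have "k*(q+1) \<le> k*(4*j)" by (rule mult_left_mono) simp
      then have "k*(q+1) \<le> 4*k*j" by (simp add: algebra_simps)
      then have "(k*(q+1))^e \<le> (4*k)^e * j^e" by (metis power_mono power_mult_distrib zero_le)
      also have "\<dots> \<le> (4*k)^k * j^e"
        by (rule mult_right_mono[OF power_increasing]) (use ek k1 in auto)
      finally have "(k*(q+1))^e \<le> (4*k)^k * j^e" .
      then have "(k*(q+1))^e * ((4*k+4) * (\<tau>+1)^k) \<le> ((4*k)^k * j^e) * ((4*k+4) * (\<tau>+1)^k)"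
        by (rule mult_right_mono) simp
      also have "\<dots> = j^e * ((4*k)^k * (4*k+4) * (\<tau>+1)^k)" by (simp only: mult_ac)
      finally have "(k*(q+1))^e * ((4*k+4) * (\<tau>+1)^k) \<le> j^e * ((4*k)^k * (4*k+4) * (\<tau>+1)^k)" .
      also have "\<dots> \<le> j^e * 2^\<tau>" using T0 tau by (intro mult_left_mono) auto
      finally show ?thesis .
    next
      case False
      have "(k*(q+1))^e \<le> (k*(q+1))^k" using ek k1 by (intro power_increasing) auto
      moreover have "(\<tau>+1)^k \<le> (q+1)^k" using tau by (intro power_mono) auto
      ultimately have "(k*(q+1))^e * ((4*k+4) * (\<tau>+1)^k) \<le> (k*(q+1))^k * ((4*k+4) * (q+1)^k)"
        by (intro mult_mono) auto
      also have "\<dots> = k^k * (4*k+4) * (q+1)^(2*k)"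
      proof -
        have "(q+1)^(2*k) = (q+1)^k * (q+1)^k" by (simp only: mult_2 power_add)
        then show ?thesis by (simp only: power_mult_distrib mult_ac)
      qed
      also have "\<dots> \<le> 2^\<tau>"
      proof (rule sq_le_imp)
        have "(k^k * (4*k+4) * (q+1)^(2*k))^2 = (k^k * (4*k+4))^2 * (q+1)^(4*k)"
          by (simp add: power_mult_distrib power_mult[symmetric] mult.commute)
        also have "\<dots> \<le> 2^q" by (rule Q3)
        also have "\<dots> \<le> (2^\<tau>)^2" using False by (simp add: power_mult[symmetric] mult.commute)
        finally show "(k^k * (4*k+4) * (q+1)^(2*k))^2 \<le> (2^\<tau>)^2" .
      qed
      also have "\<dots> \<le> j^e * 2^\<tau>" using jk k1 by simp
      finally show ?thesis .
    qed
    have "binom_le q e * ((4*k+4) * binom_le \<tau> k) * k^e \<le> (q+1)^e * ((4*k+4) * (\<tau>+1)^k) * k^e"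
      using B X by (intro mult_mono) auto
    also have "\<dots> = (k*(q+1))^e * ((4*k+4) * (\<tau>+1)^k)"
      by (simp only: power_mult_distrib[of k "q+1" e] mult_ac)
    also have "\<dots> \<le> j^e * 2^\<tau>" by (rule main)
    also have "\<dots> \<le> k^e * (j choose e) * 2^\<tau>" using low by simp
    finally have "binom_le q e * ((4*k+4) * binom_le \<tau> k) * k^e \<le> (j choose e) * 2^\<tau> * k^e"
      by (simp add: algebra_simps)
    then show ?thesis unfolding j_def using k1 by simp
  qed
qed



lemma sumB:
  "(\<Sum>s\<in>{\<tau><..\<tau>+n}. int (binom_le (m + (s - \<tau>) - 1) k) * 2^(\<tau>+n-s)) \<le> 2^n * (int k + 1) * int (binom_le m k)"
proof -
  have "(\<Sum>s\<in>{\<tau><..\<tau>+n}. int (binom_le (m + (s - \<tau>) - 1) k) * 2^(\<tau>+n-s))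
      = (\<Sum>s\<in>{\<tau><..\<tau>+n}. \<Sum>e\<le>k. int ((m + (s - \<tau>) - 1) choose e) * 2^(\<tau>+n-s))"
    by (simp add: binom_le_def sum_distrib_right)
  also have "\<dots> = (\<Sum>e\<le>k. \<Sum>s\<in>{\<tau><..\<tau>+n}. int ((m + (s - \<tau>) - 1) choose e) * 2^(\<tau>+n-s))"
    by (rule sum.swap)
  also have "\<dots> \<le> (\<Sum>e\<le>k. 2^n * int (binom_le m k))"
  proof (rule sum_mono)
    fix e assume "e \<in> {..k}"
    then have "binom_le m e \<le> binom_le m k" by (intro binom_le_mono2) simp
    then show "(\<Sum>s\<in>{\<tau><..\<tau>+n}. int ((m + (s - \<tau>) - 1) choose e) * 2^(\<tau>+n-s)) \<le> 2^n * int (binom_le m k)"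
    proof -
      have "(\<Sum>s\<in>{\<tau><..\<tau>+n}. int ((m + (s - \<tau>) - 1) choose e) * 2^(\<tau>+n-s)) \<le> 2^n * int (binom_le m e)"
        using ident_H[where \<tau>=\<tau> and n=n and m=m and e=e] by linarith
      also have "\<dots> \<le> 2^n * int (binom_le m k)"
        using \<open>binom_le m e \<le> binom_le m k\<close> by (intro mult_left_mono) auto
      finally show ?thesis .
    qed
  qed
  also have "\<dots> = 2^n * (int k + 1) * int (binom_le m k)" by simp
  finally show ?thesis .
qed

lemma binom_le_1S: "binom_le (Suc 0) (Suc m) = 2"
  by (induction m) (simp_all add: binom_le_Suc)

lemma binom_le_1: "binom_le 1 k \<le> 2"
  by (cases k) (simp_all add: binom_le_1S del: One_nat_def, simp add: binom_le_1S)

lemma wt_sum: "length x = Suc k \<Longrightarrow> wt q x = (\<Sum>i<Suc k. x!i * binom_le q (k - i))"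
  by (simp add: wt_def)

lemma lf_fc_nat: "length x = Suc k \<Longrightarrow> lf (fc k e r) x = int (\<Sum>i<Suc k. x!i * cbi r (int k - int i - int e))"
  by (simp add: lf_def fc_def)

lemma arith1:
  fixes P Bt Bt1 K S1 S2 :: int
  assumes "0 \<le> K" "0 \<le> P" "1 \<le> Bt" "P*Bt1 \<le> P*Bt" "S1 \<le> P*(K+1)*2" "S2 \<le> P*(K+1)*Bt"
  shows "P*Bt1 + (S1 + S2) \<le> P*(4*K+4)*Bt"
proof -
  have a: "P*(K+1)*2 * 1 \<le> P*(K+1)*2 * Bt" using assms by (intro mult_left_mono) auto
  have b: "0 \<le> P * K * Bt" using assms by simp
  have "P*Bt1 + (S1 + S2) \<le> P*Bt + P*(K+1)*2*Bt + P*(K+1)*Bt" using assms a by linarith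
  also have "\<dots> = P*(4*K+4)*Bt - P*K*Bt" by (simp add: algebra_simps)
  finally show ?thesis using b by linarith
qed

lemma INIT:
  assumes T0: "\<forall>n\<ge>TE. (4*k)^k * (4*k+4) * (n+1)^k \<le> 2^n"
    and Q3: "(k^k * (4*k+4))^2 * (q+1)^(4*k) \<le> 2^q"
    and q1: "1 \<le> q" and kq: "TE + k \<le> q" and QA2: "2^(TE+1) * k^k \<le> q"
    and lx: "length x = Suc k" and wlo: "2^q + surf k q k \<le> wt q x" and whi: "wt q x \<le> 2^(q+1)"
  shows "MI k q TE (2*k+3) q x"
proof -
  have ii: "2^q + int (surf k q (q - (q - k))) \<le> int (wt q x)"
    using wlo kq by (simp add: diff_diff_cancel) (metis of_nat_add of_nat_le_iff of_nat_numeral of_nat_power)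
  have iii: "\<forall>\<tau>. TE < \<tau> \<longrightarrow> \<tau> \<le> q \<longrightarrow> \<tau> \<le> q - k \<longrightarrow>
        2^(q-\<tau>) * int (binom_le (\<tau>-1) k) + (\<Sum>s\<in>{\<tau><..q}. int (binom_le (s-\<tau>) k + binom_le (s-1) k) * 2^(q-s))
          \<le> lf (fc k 0 (q - \<tau>)) x"
  proof (intro allI impI)
    fix \<tau> assume h: "TE < \<tau>" "\<tau> \<le> q" "\<tau> \<le> q - k"
    define j where "j = q - \<tau>"
    have qj: "q = \<tau> + j" unfolding j_def using h by simp
    have s1: "(\<Sum>s\<in>{\<tau><..q}. int (binom_le (s-\<tau>) k) * 2^(q-s)) \<le> 2^j * (int k + 1) * 2"
    proof -
      have "(\<Sum>s\<in>{\<tau><..q}. int (binom_le (s-\<tau>) k) * 2^(q-s)) = (\<Sum>s\<in>{\<tau><..\<tau>+j}. int (binom_le (1 + (s - \<tau>) - 1) k) * 2^(\<tau>+j-s))"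
        unfolding qj by simp
      also have "\<dots> \<le> 2^j * (int k + 1) * int (binom_le 1 k)" by (rule sumB)
      also have "\<dots> \<le> 2^j * (int k + 1) * 2" using binom_le_1[of k] by (intro mult_left_mono) auto
      finally show ?thesis .
    qed
    have s2: "(\<Sum>s\<in>{\<tau><..q}. int (binom_le (s-1) k) * 2^(q-s)) \<le> 2^j * (int k + 1) * int (binom_le \<tau> k)"
    proof -
      have "(\<Sum>s\<in>{\<tau><..q}. int (binom_le (s-1) k) * 2^(q-s)) = (\<Sum>s\<in>{\<tau><..\<tau>+j}. int (binom_le (\<tau> + (s - \<tau>) - 1) k) * 2^(\<tau>+j-s))"
        unfolding qj by (intro sum.cong) auto
      also have "\<dots> \<le> 2^j * (int k + 1) * int (binom_le \<tau> k)" by (rule sumB)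
      finally show ?thesis .
    qed
    have bt: "binom_le (\<tau>-1) k \<le> binom_le \<tau> k" by (intro binom_le_mono1) simp
    have b1: "1 \<le> binom_le \<tau> k" by (rule binom_le_pos)
    have rhs: "2^(q-\<tau>) * int (binom_le (\<tau>-1) k) + (\<Sum>s\<in>{\<tau><..q}. int (binom_le (s-\<tau>) k + binom_le (s-1) k) * 2^(q-s))
        \<le> 2^j * (4 * int k + 4) * int (binom_le \<tau> k)"
    proof -
      have "(\<Sum>s\<in>{\<tau><..q}. int (binom_le (s-\<tau>) k + binom_le (s-1) k) * 2^(q-s))
         = (\<Sum>s\<in>{\<tau><..q}. int (binom_le (s-\<tau>) k) * 2^(q-s)) + (\<Sum>s\<in>{\<tau><..q}. int (binom_le (s-1) k) * 2^(q-s))"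
        by (simp add: sum.distrib algebra_simps)
      moreover have "(2::int)^j * (int k + 1) * 2 \<le> 2^j * (int k + 1) * 2 * int (binom_le \<tau> k)"
      proof -
        have b1': "(1::int) \<le> int (binom_le \<tau> k)" using b1 by simp
        show ?thesis using mult_left_mono[OF b1', of "2^j * (int k + 1) * 2"] by simp
      qed
      moreover have "(2::int)^j * int (binom_le (\<tau>-1) k) \<le> 2^j * int (binom_le \<tau> k)"
        using bt by simp
      ultimately show ?thesis using s1 s2 arith1[of "int k" "2^j" "int (binom_le \<tau> k)" "int (binom_le (\<tau>-1) k)"] b1
        unfolding j_def[symmetric] by simp
    qed
    have lhs: "2^j * (4*k+4) * binom_le \<tau> k \<le> (\<Sum>i<Suc k. x!i * cbi j (int k - int i - int 0))"
    proof -
      have "2^\<tau> * (2^j * (4*k+4) * binom_le \<tau> k) = 2^q * ((4*k+4) * binom_le \<tau> k)"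
        unfolding qj by (simp add: power_add)
      also have "\<dots> \<le> wt q x * ((4*k+4) * binom_le \<tau> k)" using wlo by simp
      also have "\<dots> = (\<Sum>i<Suc k. x!i * (binom_le q (k - i) * ((4*k+4) * binom_le \<tau> k)))"
        unfolding wt_sum[OF lx] by (simp only: sum_distrib_right mult.assoc)
      also have "\<dots> \<le> (\<Sum>i<Suc k. x!i * ((j choose (k - i)) * 2^\<tau>))"
      proof (rule sum_mono)
        fix i assume "i \<in> {..<Suc k}"
        have "binom_le q (k - i) * ((4*k+4) * binom_le \<tau> k) \<le> ((q - \<tau>) choose (k - i)) * 2^\<tau>"
          by (rule A1[OF T0 Q3]) (use h kq q1 in auto)
        then show "x!i * (binom_le q (k - i) * ((4*k+4) * binom_le \<tau> k)) \<le> x!i * ((j choose (k - i)) * 2^\<tau>)"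
          unfolding j_def by (rule mult_left_mono) simp
      qed
      also have "\<dots> = 2^\<tau> * (\<Sum>i<Suc k. x!i * cbi j (int k - int i - int 0))"
        by (simp add: sum_distrib_left cbi_def nat_diff_distrib algebra_simps)
      finally show ?thesis by simp
    qed
    show "2^(q-\<tau>) * int (binom_le (\<tau>-1) k) + (\<Sum>s\<in>{\<tau><..q}. int (binom_le (s-\<tau>) k + binom_le (s-1) k) * 2^(q-s))
          \<le> lf (fc k 0 (q - \<tau>)) x"
    proof -
      have "int (2^j * (4*k+4) * binom_le \<tau> k) \<le> lf (fc k 0 (q - \<tau>)) x"
        using lhs unfolding lf_fc_nat[OF lx] j_def by (simp only: of_nat_le_iff)
      then show ?thesis using rhs by simp
    qed
  qed
  have iv: "\<forall>e. 1 \<le> e \<longrightarrow> e \<le> k \<longrightarrow>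
        lf (fc k e (q - TE)) x + (\<Sum>s\<in>{TE<..q}. int (binom_le (s-TE) k) * 2^(q-s)) \<le> 2^(q-TE) * int (2*k+3)"
  proof (intro allI impI)
    fix e assume h: "1 \<le> e" "e \<le> k"
    define j where "j = q - TE"
    have qj: "q = TE + j" unfolding j_def using kq by simp
    have s1: "(\<Sum>s\<in>{TE<..q}. int (binom_le (s-TE) k) * 2^(q-s)) \<le> 2^j * (int k + 1) * 2"
    proof -
      have "(\<Sum>s\<in>{TE<..q}. int (binom_le (s-TE) k) * 2^(q-s)) = (\<Sum>s\<in>{TE<..TE+j}. int (binom_le (1 + (s - TE) - 1) k) * 2^(TE+j-s))"
        unfolding qj by simp
      also have "\<dots> \<le> 2^j * (int k + 1) * int (binom_le 1 k)" by (rule sumB)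
      also have "\<dots> \<le> 2^j * (int k + 1) * 2" using binom_le_1[of k] by (intro mult_left_mono) auto
      finally show ?thesis .
    qed
    have f: "(\<Sum>i<Suc k. x!i * cbi j (int k - int i - int e)) \<le> 2^j"
    proof -
      have "2^(TE+1) * (\<Sum>i<Suc k. x!i * cbi j (int k - int i - int e)) = (\<Sum>i<Suc k. x!i * (cbi j (int k - int i - int e) * 2^(TE+1)))"
        by (simp add: sum_distrib_left algebra_simps)
      also have "\<dots> \<le> (\<Sum>i<Suc k. x!i * binom_le q (k - i))"
      proof (rule sum_mono)
        fix i assume i: "i \<in> {..<Suc k}"
        have "cbi j (int k - int i - int e) * 2^(TE+1) \<le> binom_le q (k - i)"
        proof (cases "int k - int i - int e < 0")
          case True then show ?thesis by (simp add: cbi_def)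
        next
          case False
          then have "nat (int k - int i - int e) = (k - i) - e" by simp
          then have "cbi j (int k - int i - int e) = (q - TE) choose ((k - i) - e)"
            using False unfolding j_def by (simp add: cbi_def)
          moreover have "((q - TE) choose ((k - i) - e)) * 2^(TE+1) \<le> binom_le q (k - i)"
            by (rule A2) (use h False kq QA2 in auto)
          ultimately show ?thesis by simp
        qed
        then show "x!i * (cbi j (int k - int i - int e) * 2^(TE+1)) \<le> x!i * binom_le q (k - i)"
          by (rule mult_left_mono) simp
      qed
      also have "\<dots> = wt q x" using wt_sum[OF lx] by simp
      also have "\<dots> \<le> 2^(TE+1) * 2^j" using whi unfolding qj by (simp add: power_add)
      finally show ?thesis by simp
    qed
    have "lf (fc k e (q - TE)) x \<le> 2^j"
      using f unfolding lf_fc_nat[OF lx] j_def[symmetric]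
      by (metis of_nat_le_iff of_nat_numeral of_nat_power)
    then show "lf (fc k e (q - TE)) x + (\<Sum>s\<in>{TE<..q}. int (binom_le (s-TE) k) * 2^(q-s)) \<le> 2^(q-TE) * int (2*k+3)"
      using s1 unfolding j_def[symmetric] by (simp add: algebra_simps)
  qed
  show ?thesis unfolding MI_def using lx ii iii iv by blast
qed



lemma wins_mono:
  assumes "paul_wins t x" "length y = length x" "\<forall>i<length x. x!i \<le> y!i"
  shows "paul_wins t y"
  using assms
proof (induction t arbitrary: x y)
  case 0
  have "sum_list x \<le> sum_list y"
    unfolding sum_list_sum_nth "0.prems"(2) using "0.prems"(3) by (intro sum_mono) auto
  then show ?case using "0.prems"(1) by simp
next
  case (Suc t)
  from Suc.prems(1) obtain a where a: "legal_question x a" "paul_wins t (yes_state x a)" "paul_wins t (no_state x a)"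
    by auto
  have la: "legal_question y a" using a(1) Suc.prems(2,3) unfolding legal_question_def
    by (auto intro: order_trans)
  have aa: "\<forall>i<length x. a!i \<le> x!i" using a(1) unfolding legal_question_def by simp
  have Y: "paul_wins t (yes_state y a)"
  proof (rule Suc.IH[OF a(2)])
    show "length (yes_state y a) = length (yes_state x a)" using Suc.prems(2) by simp
    show "\<forall>i<length (yes_state x a). yes_state x a ! i \<le> yes_state y a ! i"
    proof (intro allI impI)
      fix i assume i: "i < length (yes_state x a)"
      then have i': "i < length x" by simp
      show "yes_state x a ! i \<le> yes_state y a ! i"
      proof (cases "i = 0")
        case True then show ?thesis using i' Suc.prems(2) by (simp add: yes_nth)
      next
        case False
        then have "x!(i-1) \<le> y!(i-1)" using Suc.prems(3) i' by simp
        then show ?thesis using i' False Suc.prems(2) by (simp add: yes_nth)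
      qed
    qed
  qed
  have N: "paul_wins t (no_state y a)"
  proof (rule Suc.IH[OF a(3)])
    show "length (no_state y a) = length (no_state x a)" using Suc.prems(2) by simp
    show "\<forall>i<length (no_state x a). no_state x a ! i \<le> no_state y a ! i"
    proof (intro allI impI)
      fix i assume i: "i < length (no_state x a)"
      then have i': "i < length x" by simp
      have xy: "x!i \<le> y!i" using Suc.prems(3) i' by simp
      show "no_state x a ! i \<le> no_state y a ! i"
      proof (cases "i = 0")
        case True then show ?thesis using xy i' Suc.prems(2) by (simp add: no_nth diff_le_mono)
      next
        case False then show ?thesis using xy i' Suc.prems(2) by (simp add: no_nth diff_le_mono)
      qed
    qed
  qed
  show ?case using la Y N by auto
qed

lemma wt_update:
  assumes lx: "length x = Suc k" and i: "i < Suc k"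
  shows "wt q (x[i := v]) + x!i * binom_le q (k - i) = wt q x + v * binom_le q (k - i)"
proof -
  let ?w = "\<lambda>j. binom_le q (k - j)"
  have fin: "finite {..<Suc k}" by simp
  have iin: "i \<in> {..<Suc k}" using i by simp
  have "wt q (x[i := v]) = (\<Sum>j<Suc k. x[i:=v]!j * ?w j)" using lx by (simp add: wt_sum)
  also have "\<dots> = v * ?w i + (\<Sum>j\<in>{..<Suc k} - {i}. x[i:=v]!j * ?w j)"
    using sum.remove[OF fin iin, of "\<lambda>j. x[i:=v]!j * ?w j"] lx i by (simp del: sum.lessThan_Suc)
  also have "(\<Sum>j\<in>{..<Suc k} - {i}. x[i:=v]!j * ?w j) = (\<Sum>j\<in>{..<Suc k} - {i}. x!j * ?w j)"
    by (rule sum.cong) auto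
  finally have a: "wt q (x[i := v]) = v * ?w i + (\<Sum>j\<in>{..<Suc k} - {i}. x!j * ?w j)" .
  have "wt q x = (\<Sum>j<Suc k. x!j * ?w j)" using lx by (simp add: wt_sum)
  also have "\<dots> = x!i * ?w i + (\<Sum>j\<in>{..<Suc k} - {i}. x!j * ?w j)"
    using sum.remove[OF fin iin, of "\<lambda>j. x!j * ?w j"] by (simp del: sum.lessThan_Suc)
  finally show ?thesis using a by simp
qed

lemma trim:
  assumes "length x = Suc k" "A \<le> wt q x"
  shows "\<exists>y. length y = Suc k \<and> (\<forall>i<Suc k. y!i \<le> x!i) \<and> A \<le> wt q y \<and> wt q y \<le> A + binom_le q k"
  using assms
proof (induction "wt q x" arbitrary: x rule: less_induct)
  case less
  show ?case
  proof (cases "wt q x \<le> A + binom_le q k")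
    case True
    then show ?thesis using less.prems by blast
  next
    case False
    have "\<exists>i<Suc k. 0 < x!i"
    proof (rule ccontr)
      assume "\<not> (\<exists>i<Suc k. 0 < x!i)"
      then have "wt q x = 0" using less.prems(1) by (simp add: wt_sum)
      then show False using False by simp
    qed
    then obtain i where i: "i < Suc k" "0 < x!i" by blast
    define x' where "x' = x[i := x!i - 1]"
    have lx': "length x' = Suc k" unfolding x'_def using less.prems(1) by simp
    have u: "wt q x' + x!i * binom_le q (k - i) = wt q x + (x!i - 1) * binom_le q (k - i)"
      unfolding x'_def by (rule wt_update[OF less.prems(1) i(1)])
    have u2: "wt q x' + binom_le q (k - i) = wt q x"
    proof -
      have "x!i * binom_le q (k - i) = (x!i - 1) * binom_le q (k - i) + binom_le q (k - i)"
        using i(2) by (metis Suc_diff_1 add.commute mult_Suc)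
      then show ?thesis using u by simp
    qed
    have b1: "1 \<le> binom_le q (k - i)" by (rule binom_le_pos)
    have b2: "binom_le q (k - i) \<le> binom_le q k" by (rule binom_le_mono2) simp
    have lt: "wt q x' < wt q x" using u2 b1 by simp
    have ge: "A \<le> wt q x'" using u2 b2 False by simp
    obtain y where y: "length y = Suc k" "\<forall>j<Suc k. y!j \<le> x'!j" "A \<le> wt q y" "wt q y \<le> A + binom_le q k"
      using less.hyps[OF lt lx' ge] by blast
    have "\<forall>j<Suc k. y!j \<le> x!j"
    proof (intro allI impI)
      fix j assume j: "j < Suc k"
      have "x'!j \<le> x!j" unfolding x'_def using less.prems(1) j by (cases "j = i") auto
      then show "y!j \<le> x!j" using y(2) j by (meson order_trans)
    qed
    then show ?thesis using y by blast
  qed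
qed



theorem theorem8:
  fixes k :: nat
  shows "\<exists>(c1::real) (qstar::nat). \<forall>q\<ge>qstar. \<forall>x::nat list.
           length x = k + 1 \<longrightarrow>
           real (wt q x) \<ge> 2 ^ q + c1 * real (q choose k) \<longrightarrow>
           paul_wins q x"
proof -
  obtain T0 where T0: "\<forall>n\<ge>T0. ((4*k)^k * (4*k+4)) * (n+1)^k \<le> 2^n"
    using poly_exp[of "(4*k)^k * (4*k+4)" k] by blast
  define Cap where "Cap = 2*k+3"
  define TE where "TE = max T0 ((2*k+1) * (k * Cap))"
  obtain N3 where N3: "\<forall>n\<ge>N3. (k^k * (4*k+4))^2 * (n+1)^(4*k) \<le> 2^n"
    using poly_exp[of "(k^k * (4*k+4))^2" "4*k"] by blast
  obtain N5 where N5: "\<forall>n\<ge>N5. 2^k * (n+1)^k \<le> (2::nat)^n"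
    using poly_exp[of "2^k" k] by blast
  define qstar where "qstar = max (TE + k + 1) (max (2*k) (max N3 (max N5 (2^(TE+1) * k^k + 1))))"
  define c1 where "c1 = real (2^k * (k+1))"
  show ?thesis
  proof (intro exI allI impI)
    fix q x
    assume q: "qstar \<le> q" and lx0: "length x = k + 1" and hw: "2 ^ q + c1 * real (q choose k) \<le> real (wt q x)"
    have lx: "length x = Suc k" using lx0 by simp
    have kq: "k \<le> q" "2*k \<le> q" "1 \<le> q" "TE + k \<le> q" "2^(TE+1) * k^k \<le> q" "N3 \<le> q" "N5 \<le> q" "TE \<le> q"
      using q unfolding qstar_def by auto
    define A where "A = 2^q + surf k q k"
    have sb: "surf k q k + binom_le q k \<le> 2^k * binom_le q k" using surf_bound[of k k q] kq by simp
    have bc: "binom_le q k \<le> (k+1) * (q choose k)" using binom_le_le_choose kq by simp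
    have "surf k q k \<le> 2^k * ((k+1) * (q choose k))"
      using sb bc by (meson add_leE le_trans mult_le_mono2)
    then have "real (surf k q k) \<le> real (2^k * ((k+1) * (q choose k)))" by (simp only: of_nat_le_iff)
    then have "real A \<le> 2^q + c1 * real (q choose k)"
      unfolding A_def c1_def by (simp only: of_nat_add of_nat_mult mult.assoc of_nat_power of_nat_numeral)
    then have Aw: "A \<le> wt q x" using hw by linarith
    obtain y where y: "length y = Suc k" "\<forall>i<Suc k. y!i \<le> x!i" "A \<le> wt q y" "wt q y \<le> A + binom_le q k"
      using trim[OF lx Aw] by blast
    have whi: "wt q y \<le> 2^(q+1)"
    proof -
      have "wt q y \<le> 2^q + 2^k * binom_le q k" using y(4) sb unfolding A_def by simp
      also have "\<dots> \<le> 2^q + 2^k * (q+1)^k" using binom_le_pow_bound[of q k] by simp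
      also have "\<dots> \<le> 2^q + 2^q" using N5 kq by simp
      finally show ?thesis by simp
    qed
    have T0': "\<forall>n\<ge>TE. (4*k)^k * (4*k+4) * (n+1)^k \<le> 2^n" using T0 unfolding TE_def by simp
    have mi: "MI k q TE (2*k+3) q y"
      by (rule INIT[OF T0']) (use N3 kq y whi in \<open>auto simp: A_def\<close>)
    have "paul_wins q y"
      by (rule mid[OF kq(8) order_refl kq(1) mi]) (auto simp: TE_def Cap_def)
    then show "paul_wins q x" using wins_mono y lx by auto
  qed
qed


end
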